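(* Let $\mathbb{F}$ be a field, $p,q\in\mathbb{F}[t]$ monic of degree $2$, and $\mathcal{W}_{p,q}=\mathbb{F}\langle a,b\rangle/(p(a),q(b))$. The group of units $\mathcal{W}_{p,q}^\times$ is generated by the basic units (the units lying in $\mathbb{F}[a]\cup\mathbb{F}[b]$) if and only if both $p$ and $q$ are irreducible over $\mathbb{F}$.
   Context: $\mathcal{W}_{p,q}$ is the quotient of the free associative unital $\mathbb{F}$-algebra on two noncommuting generators by the two-sided ideal generated by $p(a)$ and $q(b)$; $a,b$ denote the images of the generators, and $\mathbb{F}[a],\mathbb{F}[b]$ are $2$-dimensional subalgebras. *)

theory Defs
  imports "HOL-Algebra.Algebra" "HOL-Computational_Algebra.Polynomial"
begin

text \<open>The free associative unital F-algebra on two noncommuting generators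
  a (encoded by the letter True) and b (encoded by the letter False):
  finitely supported F-valued functions on words over {True, False},
  with concatenation-convolution as product.\<close>

definition free_alg2 :: "(bool list \<Rightarrow> 'a::field) ring" where
  "free_alg2 = \<lparr> carrier = {f. finite {w. f w \<noteq> 0}},
       monoid.mult = (\<lambda>f g w. \<Sum>i\<le>length w. f (take i w) * g (drop i w)),
       monoid.one = (\<lambda>w. if w = [] then 1 else 0),
       ring.zero = (\<lambda>w. 0),
       ring.add = (\<lambda>f g w. f w + g w) \<rparr>"

text \<open>Evaluation of a polynomial p at the generator x (x = True for a, False for b)
  inside the free algebra: sum of coeff p i times the word x^i.\<close>
definition poly_gen :: "'a::field poly \<Rightarrow> bool \<Rightarrow> (bool list \<Rightarrow> 'a)" where
  "poly_gen p x = (\<lambda>w. if w = replicate (length w) x then coeff p (length w) else 0)"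

definition W_ideal :: "'a::field poly \<Rightarrow> 'a poly \<Rightarrow> (bool list \<Rightarrow> 'a) set" where
  "W_ideal p q = genideal free_alg2 {poly_gen p True, poly_gen q False}"

definition W_alg :: "'a::field poly \<Rightarrow> 'a poly \<Rightarrow> (bool list \<Rightarrow> 'a) set ring" where
  "W_alg p q = free_alg2 Quot W_ideal p q"

text \<open>The subalgebra F[x] of W_{p,q} (x = True: F[a], x = False: F[b]);
  it is spanned by the classes of 1 and x.\<close>
definition W_sub :: "'a::field poly \<Rightarrow> 'a poly \<Rightarrow> bool \<Rightarrow> (bool list \<Rightarrow> 'a) set set" where
  "W_sub p q x = { W_ideal p q +>\<^bsub>free_alg2\<^esub>
        (\<lambda>w. if w = [] then c else if w = [x] then d else 0) | c d. True }"

definition basic_units :: "'a::field poly \<Rightarrow> 'a poly \<Rightarrow> (bool list \<Rightarrow> 'a) set set" where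
  "basic_units p q = Units (W_alg p q) \<inter> (W_sub p q True \<union> W_sub p q False)"

end

theory Submission
  imports Defs
begin

definition fsupp :: "(bool list \<Rightarrow> 'a::zero) \<Rightarrow> bool list set" where
  "fsupp f = {w. f w \<noteq> 0}"

definition splits :: "bool list \<Rightarrow> (bool list \<times> bool list) set" where
  "splits w = {(u,v). u @ v = w}"

lemma splits_image: "splits w = (\<lambda>i. (take i w, drop i w)) ` {..length w}"
proof -
  have "(u,v) \<in> (\<lambda>i. (take i w, drop i w)) ` {..length w}" if "u @ v = w" for u v
    using that by (intro image_eqI[where x="length u"]) auto
  then show ?thesis unfolding splits_def by auto
qed

lemma finite_splits[simp]: "finite (splits w)"
  by (simp add: splits_image)

lemma conv_splits:
  "(\<Sum>i\<le>length w. f (take i w) * g (drop i w)) = (\<Sum>(u,v)\<in>splits w. f u * g v)"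
proof -
  have inj: "inj_on (\<lambda>i. (take i w, drop i w)) {..length w}"
    by (auto simp: inj_on_def) (metis length_take min.absorb2)
  show ?thesis unfolding splits_image by (simp add: sum.reindex[OF inj])
qed

lemma conv_AB:
  fixes f g :: "bool list \<Rightarrow> 'a::comm_ring_1"
  assumes "finite A" "fsupp f \<subseteq> A" "finite B" "fsupp g \<subseteq> B"
  shows "(\<Sum>(u,v)\<in>splits w. f u * g v) = (\<Sum>u\<in>A. \<Sum>v\<in>B. if u @ v = w then f u * g v else 0)"
proof -
  have "(\<Sum>u\<in>A. \<Sum>v\<in>B. if u @ v = w then f u * g v else 0)
      = (\<Sum>(u,v)\<in>A \<times> B. if u @ v = w then f u * g v else 0)"
    by (simp add: sum.cartesian_product)
  also have "\<dots> = (\<Sum>(u,v)\<in>(A \<times> B) \<inter> splits w. f u * g v)"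
    by (rule sum.mono_neutral_cong_right) (auto simp: assms splits_def split: if_splits)
  also have "\<dots> = (\<Sum>(u,v)\<in>splits w. f u * g v)"
    using assms finite_splits[of w, unfolded splits_def] by (intro sum.mono_neutral_cong_left) (auto simp: fsupp_def splits_def)
  finally show ?thesis by simp
qed

definition splits3 :: "bool list \<Rightarrow> (bool list \<times> bool list \<times> bool list) set" where
  "splits3 w = {(u,v,z). u @ v @ z = w}"

lemma finite_splits3[simp]: "finite (splits3 w)"
proof -
  have "splits3 w \<subseteq> (\<lambda>((u,y),(v,z)). (u,v,z)) ` (SIGMA p:splits w. splits (snd p))"
    by (auto simp: splits3_def splits_def image_iff)
  moreover have "finite (SIGMA p:splits w. splits (snd p))" by auto
  ultimately show ?thesis by (meson finite_imageI finite_subset)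
qed

lemma assoc_left:
  fixes F :: "bool list \<Rightarrow> bool list \<Rightarrow> 'a::comm_ring_1"
  shows "(\<Sum>(x,z)\<in>splits w. (\<Sum>(u,v)\<in>splits x. F u v) * h z) = (\<Sum>(u,v,z)\<in>splits3 w. F u v * h z)"
proof -
  have "(\<Sum>(x,z)\<in>splits w. (\<Sum>(u,v)\<in>splits x. F u v) * h z)
      = (\<Sum>p\<in>splits w. \<Sum>q\<in>splits (fst p). F (fst q) (snd q) * h (snd p))"
    by (simp add: split_def sum_distrib_right)
  also have "\<dots> = (\<Sum>(p,q)\<in>(SIGMA p:splits w. splits (fst p)). F (fst q) (snd q) * h (snd p))"
    by (rule sum.Sigma) auto
  also have "\<dots> = (\<Sum>(u,v,z)\<in>splits3 w. F u v * h z)"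
    by (rule sum.reindex_bij_witness[where i="\<lambda>(u,v,z). ((u@v,z),(u,v))" and j="\<lambda>(p,q). (fst q, snd q, snd p)"])
       (auto simp: splits3_def splits_def)
  finally show ?thesis .
qed

lemma assoc_right:
  fixes G :: "bool list \<Rightarrow> bool list \<Rightarrow> 'a::comm_ring_1"
  shows "(\<Sum>(u,y)\<in>splits w. f u * (\<Sum>(v,z)\<in>splits y. G v z)) = (\<Sum>(u,v,z)\<in>splits3 w. f u * G v z)"
proof -
  have "(\<Sum>(u,y)\<in>splits w. f u * (\<Sum>(v,z)\<in>splits y. G v z))
      = (\<Sum>p\<in>splits w. \<Sum>q\<in>splits (snd p). f (fst p) * G (fst q) (snd q))"
    by (simp add: split_def sum_distrib_left)
  also have "\<dots> = (\<Sum>(p,q)\<in>(SIGMA p:splits w. splits (snd p)). f (fst p) * G (fst q) (snd q))"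
    by (rule sum.Sigma) auto
  also have "\<dots> = (\<Sum>(u,v,z)\<in>splits3 w. f u * G v z)"
    by (rule sum.reindex_bij_witness[where i="\<lambda>(u,v,z). ((u,v@z),(v,z))" and j="\<lambda>(p,q). (fst p, fst q, snd q)"])
       (auto simp: splits3_def splits_def)
  finally show ?thesis .
qed

definition fmul :: "(bool list \<Rightarrow> 'a::comm_ring_1) \<Rightarrow> (bool list \<Rightarrow> 'a) \<Rightarrow> bool list \<Rightarrow> 'a" where
  "fmul f g = (\<lambda>w. \<Sum>(u,v)\<in>splits w. f u * g v)"

definition dl :: "bool list \<Rightarrow> bool list \<Rightarrow> 'a::zero_neq_one" where
  "dl w = (\<lambda>v. if v = w then 1 else 0)"

lemma FA_carrier: "carrier (free_alg2::(bool list \<Rightarrow> 'a::field) ring) = {f. finite (fsupp f)}"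
  by (simp add: free_alg2_def fsupp_def)
lemma FA_mult: "monoid.mult (free_alg2::(bool list \<Rightarrow> 'a::field) ring) = fmul"
  by (simp add: free_alg2_def fmul_def conv_splits fun_eq_iff)
lemma FA_one: "monoid.one (free_alg2::(bool list \<Rightarrow> 'a::field) ring) = dl []"
  by (simp add: free_alg2_def dl_def fun_eq_iff)
lemma FA_zero: "ring.zero (free_alg2::(bool list \<Rightarrow> 'a::field) ring) = (\<lambda>w. 0)"
  by (simp add: free_alg2_def)
lemma FA_add: "ring.add (free_alg2::(bool list \<Rightarrow> 'a::field) ring) = (\<lambda>f g w. f w + g w)"
  by (simp add: free_alg2_def)

lemmas FA_defs = FA_carrier FA_mult FA_one FA_zero FA_add

lemma fmul_assoc: "fmul (fmul f g) h = fmul f (fmul g h)"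
  unfolding fmul_def
  by (rule ext) (simp add: assoc_left[where F="\<lambda>u v. f u * g v"] assoc_right[where G="\<lambda>v z. g v * h z"] mult.assoc)

lemma fsupp_fmul: "fsupp (fmul f g) \<subseteq> (\<lambda>(u,v). u @ v) ` (fsupp f \<times> fsupp g)"
proof
  fix w assume "w \<in> fsupp (fmul f g)"
  then have "(\<Sum>(u,v)\<in>splits w. f u * g v) \<noteq> 0" by (simp add: fsupp_def fmul_def)
  then obtain u v where "(u,v) \<in> splits w" "f u * g v \<noteq> 0"
    by (metis (no_types, lifting) case_prod_conv sum.not_neutral_contains_not_neutral surj_pair)
  moreover then have "f u \<noteq> 0" "g v \<noteq> 0" by auto
  ultimately show "w \<in> (\<lambda>(u,v). u @ v) ` (fsupp f \<times> fsupp g)"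
    by (auto simp: splits_def fsupp_def image_iff)
qed

lemma finite_fmul: "finite (fsupp f) \<Longrightarrow> finite (fsupp g) \<Longrightarrow> finite (fsupp (fmul f g))"
  by (rule finite_subset[OF fsupp_fmul]) auto

lemma fmul_one_left: "fmul (dl []) f = f"
proof
  fix w
  have "(\<Sum>(u,v)\<in>splits w. dl [] u * f v) = (\<Sum>(u,v)\<in>{([],w)}. dl [] u * f v)"
    by (rule sum.mono_neutral_cong_right) (use finite_splits[of w, unfolded splits_def] in \<open>auto simp: splits_def dl_def split: if_splits\<close>)
  then show "fmul (dl []) f w = f w" by (simp add: fmul_def dl_def)
qed

lemma fmul_one_right: "fmul f (dl []) = f"
proof
  fix w
  have "(\<Sum>(u,v)\<in>splits w. f u * dl [] v) = (\<Sum>(u,v)\<in>{(w,[])}. f u * dl [] v)"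
    by (rule sum.mono_neutral_cong_right) (use finite_splits[of w, unfolded splits_def] in \<open>auto simp: splits_def dl_def split: if_splits\<close>)
  then show "fmul f (dl []) w = f w" by (simp add: fmul_def dl_def)
qed

lemma fmul_add_left: "fmul (\<lambda>w. f w + g w) h = (\<lambda>w. fmul f h w + fmul g h w)"
  by (simp add: fmul_def distrib_right sum.distrib split_def)

lemma fmul_add_right: "fmul h (\<lambda>w. f w + g w) = (\<lambda>w. fmul h f w + fmul h g w)"
  by (simp add: fmul_def distrib_left sum.distrib split_def)

lemma fsupp_add: "fsupp (\<lambda>w. f w + g w) \<subseteq> fsupp f \<union> (fsupp g :: bool list set)"
  for f g :: "bool list \<Rightarrow> 'a::comm_monoid_add"
  by (auto simp: fsupp_def)

lemma FA_ring: "ring (free_alg2::(bool list \<Rightarrow> 'a::field) ring)"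
proof (rule ringI)
  show "abelian_group (free_alg2::(bool list \<Rightarrow> 'a::field) ring)"
  proof (rule abelian_groupI)
    fix x y z :: "bool list \<Rightarrow> 'a"
    assume x: "x \<in> carrier free_alg2" and y: "y \<in> carrier free_alg2"
    show "x \<oplus>\<^bsub>free_alg2\<^esub> y \<in> carrier free_alg2"
      using x y fsupp_add[of x y] unfolding FA_defs by (metis finite_Un finite_subset mem_Collect_eq)
    show "x \<oplus>\<^bsub>free_alg2\<^esub> y = y \<oplus>\<^bsub>free_alg2\<^esub> x" unfolding FA_defs by (simp add: add.commute)
    show "x \<oplus>\<^bsub>free_alg2\<^esub> y \<oplus>\<^bsub>free_alg2\<^esub> z = x \<oplus>\<^bsub>free_alg2\<^esub> (y \<oplus>\<^bsub>free_alg2\<^esub> z)" unfolding FA_defs by (simp add: add.assoc)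
  next
    show "\<zero>\<^bsub>free_alg2\<^esub> \<in> carrier (free_alg2::(bool list \<Rightarrow> 'a::field) ring)"
      unfolding FA_defs by (simp add: fsupp_def)
  next
    fix x :: "bool list \<Rightarrow> 'a" assume x: "x \<in> carrier free_alg2"
    show "\<zero>\<^bsub>free_alg2\<^esub> \<oplus>\<^bsub>free_alg2\<^esub> x = x" unfolding FA_defs by simp
    show "\<exists>y\<in>carrier free_alg2. y \<oplus>\<^bsub>free_alg2\<^esub> x = \<zero>\<^bsub>free_alg2\<^esub>"
      using x unfolding FA_defs by (intro bexI[where x="\<lambda>w. - x w"]) (auto simp: fsupp_def)
  qed
  show "monoid (free_alg2::(bool list \<Rightarrow> 'a::field) ring)"
    by (rule monoidI) (auto simp: FA_defs finite_fmul fmul_assoc fmul_one_left fmul_one_right, simp add: dl_def fsupp_def)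
qed (simp_all add: FA_defs fmul_add_left fmul_add_right)

lemma FA_a_inv: "f \<in> carrier free_alg2 \<Longrightarrow> a_inv (free_alg2::(bool list \<Rightarrow> 'a::field) ring) f = (\<lambda>w. - f w)"
proof -
  assume f: "f \<in> carrier free_alg2"
  interpret R: ring "free_alg2::(bool list \<Rightarrow> 'a::field) ring" by (rule FA_ring)
  have m: "(\<lambda>w. - f w) \<in> carrier free_alg2" using f by (simp add: FA_defs fsupp_def)
  show ?thesis by (rule R.minus_equality) (use f m in \<open>simp_all add: FA_defs\<close>)
qed

lemma FA_minus: "f \<in> carrier free_alg2 \<Longrightarrow> g \<in> carrier free_alg2 \<Longrightarrow>
   a_minus (free_alg2::(bool list \<Rightarrow> 'a::field) ring) f g = (\<lambda>w. f w - g w)"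
  by (simp add: a_minus_def FA_a_inv FA_defs)

fun alt :: "bool list \<Rightarrow> bool" where
  "alt [] = True"
| "alt [x] = True"
| "alt (x # y # w) = (x \<noteq> y \<and> alt (y # w))"

definition cf :: "'a::field poly \<Rightarrow> 'a poly \<Rightarrow> bool \<Rightarrow> nat \<Rightarrow> 'a" where
  "cf p q x i = coeff (if x then p else q) i"

definition lact :: "'a::field poly \<Rightarrow> 'a poly \<Rightarrow> bool \<Rightarrow> (bool list \<Rightarrow> 'a) \<Rightarrow> bool list \<Rightarrow> 'a" where
  "lact p q x f = (\<lambda>v. case v of [] \<Rightarrow> - cf p q x 0 * f [x]
     | y # w \<Rightarrow> if y = x then (if w = [] \<or> hd w \<noteq> x then f w - cf p q x 1 * f v else 0)
               else - cf p q x 0 * f (x # v))"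

definition lword :: "'a::field poly \<Rightarrow> 'a poly \<Rightarrow> bool list \<Rightarrow> (bool list \<Rightarrow> 'a) \<Rightarrow> bool list \<Rightarrow> 'a" where
  "lword p q w f = foldr (lact p q) w f"

lemma lword_Nil[simp]: "lword p q [] f = f" by (simp add: lword_def)
lemma lword_Cons[simp]: "lword p q (x # w) f = lact p q x (lword p q w f)" by (simp add: lword_def)
lemma lword_append: "lword p q (u @ v) f = lword p q u (lword p q v f)" by (simp add: lword_def)

definition act :: "'a::field poly \<Rightarrow> 'a poly \<Rightarrow> (bool list \<Rightarrow> 'a) \<Rightarrow> (bool list \<Rightarrow> 'a) \<Rightarrow> bool list \<Rightarrow> 'a" where
  "act p q g f = (\<lambda>v. \<Sum>w\<in>fsupp g. g w * lword p q w f v)"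

definition Vset :: "(bool list \<Rightarrow> 'a::zero) set" where
  "Vset = {f. finite (fsupp f) \<and> (\<forall>w. f w \<noteq> 0 \<longrightarrow> alt w)}"

lemma lact_add: "lact p q x (\<lambda>v. f v + g v) = (\<lambda>v. lact p q x f v + lact p q x g v)"
  by (auto simp: lact_def fun_eq_iff algebra_simps split: list.splits)
lemma lact_smult: "lact p q x (\<lambda>v. c * f v) = (\<lambda>v. c * lact p q x f v)"
  by (auto simp: lact_def fun_eq_iff algebra_simps split: list.splits)
lemma lact_zero: "lact p q x (\<lambda>v. 0) = (\<lambda>v. 0)"
  by (auto simp: lact_def fun_eq_iff split: list.splits)

lemma lword_add: "lword p q w (\<lambda>v. f v + g v) = (\<lambda>v. lword p q w f v + lword p q w g v)"
  by (induction w) (simp_all add: lact_add)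
lemma lword_smult: "lword p q w (\<lambda>v. c * f v) = (\<lambda>v. c * lword p q w f v)"
  by (induction w) (simp_all add: lact_smult)
lemma lword_zero: "lword p q w (\<lambda>v. 0) = (\<lambda>v. 0)"
  by (induction w) (simp_all add: lact_zero)

lemma lword_sum: "finite S \<Longrightarrow> lword p q w (\<lambda>v. \<Sum>i\<in>S. F i v) = (\<lambda>v. \<Sum>i\<in>S. lword p q w (F i) v)"
proof (induction S rule: finite_induct)
  case empty then show ?case by (simp add: lword_zero)
next
  case (insert i S)
  have "lword p q w (\<lambda>v. \<Sum>i\<in>insert i S. F i v) = lword p q w (\<lambda>v. F i v + (\<Sum>i\<in>S. F i v))"
    using insert by simp
  also have "\<dots> = (\<lambda>v. lword p q w (F i) v + lword p q w (\<lambda>v. \<Sum>i\<in>S. F i v) v)"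
    by (simp add: lword_add)
  finally show ?case using insert by simp
qed

lemma lword_sum_smult: "finite S \<Longrightarrow> lword p q w (\<lambda>v. \<Sum>i\<in>S. c i * F i v) = (\<lambda>v. \<Sum>i\<in>S. c i * lword p q w (F i) v)"
proof -
  assume S: "finite S"
  have "lword p q w (\<lambda>v. \<Sum>i\<in>S. c i * F i v) = (\<lambda>v. \<Sum>i\<in>S. lword p q w (\<lambda>v. c i * F i v) v)"
    using lword_sum[OF S, of p q w "\<lambda>i v. c i * F i v"] by simp
  then show ?thesis by (simp add: lword_smult)
qed

lemma act_superset:
  assumes "finite S" "fsupp g \<subseteq> S"
  shows "act p q g f v = (\<Sum>w\<in>S. g w * lword p q w f v)"
  unfolding act_def by (rule sum.mono_neutral_left) (use assms in \<open>auto simp: fsupp_def\<close>)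

lemma act_mult:
  assumes g: "finite (fsupp g)" and h: "finite (fsupp h)"
  shows "act p q (fmul g h) f = act p q g (act p q h f)"
proof
  fix y
  let ?A = "fsupp g" and ?B = "fsupp h"
  let ?S = "(\<lambda>(u,v). u @ v) ` (?A \<times> ?B)"
  have fS: "finite ?S" using g h by auto
  have "act p q (fmul g h) f y = (\<Sum>x\<in>?S. fmul g h x * lword p q x f y)"
    by (rule act_superset[OF fS fsupp_fmul])
  also have "\<dots> = (\<Sum>x\<in>?S. (\<Sum>u\<in>?A. \<Sum>v\<in>?B. if u @ v = x then g u * h v else 0) * lword p q x f y)"
    unfolding fmul_def using conv_AB[OF g order_refl h order_refl] by simp
  also have "\<dots> = (\<Sum>x\<in>?S. \<Sum>u\<in>?A. \<Sum>v\<in>?B. if u @ v = x then g u * h v * lword p q x f y else 0)"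
    by (auto simp: sum_distrib_right intro!: sum.cong)
  also have "\<dots> = (\<Sum>u\<in>?A. \<Sum>v\<in>?B. \<Sum>x\<in>?S. if u @ v = x then g u * h v * lword p q x f y else 0)"
    by (simp add: sum.swap[of _ ?S] sum.swap[of _ ?S ?B])
  also have "\<dots> = (\<Sum>u\<in>?A. \<Sum>v\<in>?B. g u * h v * lword p q (u @ v) f y)"
    using fS by (intro sum.cong refl) (auto simp: sum.delta)
  also have "\<dots> = (\<Sum>u\<in>?A. g u * (\<Sum>v\<in>?B. h v * lword p q u (lword p q v f) y))"
    by (simp add: lword_append sum_distrib_left mult.assoc)
  also have "\<dots> = (\<Sum>u\<in>?A. g u * lword p q u (act p q h f) y)"
    unfolding act_def using lword_sum_smult[OF h, of p q _ h "\<lambda>v. lword p q v f"] by simp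
  also have "\<dots> = act p q g (act p q h f) y" by (simp add: act_def)
  finally show "act p q (fmul g h) f y = act p q g (act p q h f) y" .
qed

lemma alt_Cons: "alt (x # w) \<longleftrightarrow> alt w \<and> (w = [] \<or> hd w \<noteq> x)"
  by (cases w) auto

lemma VsetD: "f \<in> Vset \<Longrightarrow> f w \<noteq> 0 \<Longrightarrow> alt w"
  by (simp add: Vset_def)

lemma Vset_fin: "f \<in> Vset \<Longrightarrow> finite (fsupp f)"
  by (simp add: Vset_def)

lemma Vset_add: fixes f g :: "bool list \<Rightarrow> 'a::comm_monoid_add" shows "f \<in> Vset \<Longrightarrow> g \<in> Vset \<Longrightarrow> (\<lambda>v. f v + g v) \<in> Vset"
  unfolding Vset_def using fsupp_add[of f g]
  by (auto intro: finite_subset) (metis add.right_neutral add_0)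

lemma Vset_smult: fixes f :: "bool list \<Rightarrow> 'a::field" shows "f \<in> Vset \<Longrightarrow> (\<lambda>v. c * f v) \<in> Vset"
  unfolding Vset_def fsupp_def by (auto elim!: finite_subset[rotated])

lemma Vset_zero: "(\<lambda>v. 0) \<in> Vset"
  by (simp add: Vset_def fsupp_def)

lemma Vset_sum: "finite S \<Longrightarrow> (\<And>i. i \<in> S \<Longrightarrow> F i \<in> Vset) \<Longrightarrow> (\<lambda>v. \<Sum>i\<in>S. F i v) \<in> Vset"
proof (induction S rule: finite_induct)
  case empty then show ?case by (simp add: Vset_zero)
next
  case (insert i S)
  then show ?case using Vset_add[of "F i" "\<lambda>v. \<Sum>i\<in>S. F i v"] by simp
qed

lemma Vset_dl: "alt w \<Longrightarrow> dl w \<in> Vset"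
  by (auto simp: Vset_def dl_def fsupp_def)

lemma lact_Vset: assumes f: "f \<in> Vset" shows "lact p q x f \<in> Vset"
proof -
  have "fsupp (lact p q x f) \<subseteq> {[]} \<union> fsupp f \<union> (Cons x) ` fsupp f \<union> tl ` fsupp f"
  proof
    fix v assume "v \<in> fsupp (lact p q x f)"
    then have nz: "lact p q x f v \<noteq> 0" by (simp add: fsupp_def)
    show "v \<in> {[]} \<union> fsupp f \<union> (Cons x) ` fsupp f \<union> tl ` fsupp f"
    proof (cases v)
      case (Cons y w)
      show ?thesis
      proof (cases "y = x")
        case True
        then show ?thesis using nz Cons by (auto simp: lact_def fsupp_def split: if_splits)
      next
        case False
        then have "f (x # v) \<noteq> 0" using nz Cons by (auto simp: lact_def)
        then have "x # v \<in> fsupp f" by (auto simp: fsupp_def)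
        then have "tl (x # v) \<in> tl ` fsupp f" by blast
        then show ?thesis by simp
      qed
    qed simp
  qed
  moreover have "finite ({[]} \<union> fsupp f \<union> (Cons x) ` fsupp f \<union> tl ` fsupp f)"
    using Vset_fin[OF f] by simp
  ultimately have fin: "finite (fsupp (lact p q x f))" by (rule finite_subset)
  have "alt v" if nz: "lact p q x f v \<noteq> 0" for v
  proof (cases v)
    case (Cons y w)
    show ?thesis
    proof (cases "y = x")
      case True
      with nz Cons have c: "w = [] \<or> hd w \<noteq> x" and d: "f w \<noteq> 0 \<or> f v \<noteq> 0"
        by (auto simp: lact_def split: if_splits)
      show ?thesis
      proof (cases "f v \<noteq> 0")
        case True then show ?thesis using VsetD[OF f] by blast
      next
        case False
        then have "alt w" using d VsetD[OF f] by blast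
        then show ?thesis using c Cons \<open>y = x\<close> by (simp add: alt_Cons)
      qed
    next
      case False
      then have "f (x # v) \<noteq> 0" using nz Cons by (auto simp: lact_def)
      then show ?thesis using VsetD[OF f] alt_Cons by blast
    qed
  qed simp
  with fin show ?thesis by (simp add: Vset_def)
qed

lemma lword_Vset: "f \<in> Vset \<Longrightarrow> lword p q w f \<in> Vset"
  by (induction w) (simp_all add: lact_Vset)

lemma act_Vset: "finite (fsupp g) \<Longrightarrow> f \<in> Vset \<Longrightarrow> act p q g f \<in> Vset"
  unfolding act_def by (intro Vset_sum Vset_smult lword_Vset) auto

lemma act_add: "finite (fsupp g) \<Longrightarrow> finite (fsupp h) \<Longrightarrow>
   act p q (\<lambda>w. g w + h w) f = (\<lambda>v. act p q g f v + act p q h f v)"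
proof
  fix v assume g: "finite (fsupp g)" and h: "finite (fsupp h)"
  let ?S = "fsupp g \<union> fsupp h"
  have S: "finite ?S" using g h by simp
  have "act p q (\<lambda>w. g w + h w) f v = (\<Sum>w\<in>?S. (g w + h w) * lword p q w f v)"
    by (rule act_superset[OF S]) (auto simp: fsupp_def)
  also have "\<dots> = (\<Sum>w\<in>?S. g w * lword p q w f v) + (\<Sum>w\<in>?S. h w * lword p q w f v)"
    by (simp add: distrib_right sum.distrib)
  also have "\<dots> = act p q g f v + act p q h f v"
    using act_superset[OF S, of g] act_superset[OF S, of h] by auto
  finally show "act p q (\<lambda>w. g w + h w) f v = act p q g f v + act p q h f v" .
qed

lemma act_smult: "act p q (\<lambda>w. c * g w) f = (\<lambda>v. c * act p q g f v)"
proof (cases "c = 0")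
  case True then show ?thesis by (simp add: act_def fsupp_def)
next
  case False
  then have "fsupp (\<lambda>w. c * g w) = fsupp g" by (simp add: fsupp_def)
  then show ?thesis by (simp add: act_def sum_distrib_left mult.assoc)
qed

lemma act_neg: "act p q (\<lambda>w. - g w) f = (\<lambda>v. - act p q g f v)"
  using act_smult[of p q "-1" g f] by simp

lemma act_dl: "act p q (dl w) f = lword p q w f"
proof -
  have e: "fsupp (dl w) = {w}" by (simp add: fsupp_def dl_def)
  show ?thesis unfolding act_def e by (simp add: dl_def)
qed

lemma act_zero_left: "act p q (\<lambda>w. 0) f = (\<lambda>v. 0)"
  by (simp add: act_def fsupp_def)

lemma act_sum_right: "finite (fsupp g) \<Longrightarrow> finite S \<Longrightarrow>
    act p q g (\<lambda>v. \<Sum>i\<in>S. c i * F i v) = (\<lambda>v. \<Sum>i\<in>S. c i * act p q g (F i) v)"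
  unfolding act_def by (simp add: lword_sum_smult sum_distrib_left sum.swap[of _ "fsupp g"] mult.left_commute)

lemma act_add_right: "act p q g (\<lambda>v. f v + h v) = (\<lambda>v. act p q g f v + act p q g h v)"
  unfolding act_def by (simp add: lword_add distrib_left sum.distrib)

lemma act_smult_right: "act p q g (\<lambda>v. c * f v) = (\<lambda>v. c * act p q g f v)"
  unfolding act_def by (simp add: lword_smult sum_distrib_left mult.left_commute)

lemma act_zero_right: "act p q g (\<lambda>v. 0) = (\<lambda>v. 0)"
  unfolding act_def by (simp add: lword_zero)

locale wpq =
  fixes p q :: "'a::field poly"
  assumes dp: "degree p = 2" and lp: "lead_coeff p = 1"
      and dq: "degree q = 2" and lq: "lead_coeff q = 1"
begin

lemma cf2: "cf p q x 2 = 1"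
  using lp lq dp dq by (simp add: cf_def)

lemma cf_big: "n > 2 \<Longrightarrow> cf p q x n = 0"
  using dp dq by (simp add: cf_def coeff_eq_0)

lemma lact_sq:
  assumes f: "f \<in> Vset"
  shows "lact p q x (lact p q x f) v + cf p q x 1 * lact p q x f v + cf p q x 0 * f v = 0"
proof (cases v)
  case Nil then show ?thesis by (simp add: lact_def algebra_simps)
next
  case (Cons y w)
  show ?thesis
  proof (cases "y = x")
    case True
    show ?thesis
    proof (cases "w = [] \<or> hd w \<noteq> x")
      case c: True
      have gw: "lact p q x f w = - cf p q x 0 * f v"
        using c Cons True by (cases w) (auto simp: lact_def)
      show ?thesis using c Cons True gw by (simp add: lact_def algebra_simps)
    next
      case False
      then have "\<not> alt v" using Cons True by (simp add: alt_Cons)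
      then have "f v = 0" using VsetD[OF f] by blast
      then show ?thesis using False Cons True by (simp add: lact_def)
    qed
  next
    case False
    then show ?thesis using Cons by (simp add: lact_def algebra_simps)
  qed
qed

definition pgx :: "bool \<Rightarrow> bool list \<Rightarrow> 'a" where
  "pgx x = poly_gen (if x then p else q) x"

lemma pgx_fsupp: "fsupp (pgx x) \<subseteq> {[], [x], [x,x]}"
proof
  fix w assume "w \<in> fsupp (pgx x)"
  then have "w = replicate (length w) x" and c: "cf p q x (length w) \<noteq> 0"
    by (auto simp: fsupp_def pgx_def poly_gen_def cf_def split: if_splits)
  moreover have "length w \<le> 2" using c cf_big by (metis not_le)
  ultimately show "w \<in> {[], [x], [x,x]}"
    by (cases w; cases "tl w"; auto simp: le_Suc_eq numeral_2_eq_2)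
qed

lemma pgx_carrier: "pgx x \<in> carrier free_alg2"
proof -
  have "finite {[], [x], [x,x]}" by simp
  then show ?thesis using pgx_fsupp[of x] by (simp add: FA_carrier finite_subset)
qed

lemma act_pgx: assumes f: "f \<in> Vset" shows "act p q (pgx x) f = (\<lambda>v. 0)"
proof
  fix v
  have "act p q (pgx x) f v = (\<Sum>w\<in>{[], [x], [x,x]}. pgx x w * lword p q w f v)"
    by (rule act_superset[OF _ pgx_fsupp]) simp
  also have "\<dots> = cf p q x 0 * f v + cf p q x 1 * lact p q x f v + lact p q x (lact p q x f) v"
    using cf2[of x] by (simp add: pgx_def poly_gen_def cf_def numeral_2_eq_2)
  also have "\<dots> = 0" using lact_sq[OF f, of x v] by (simp add: algebra_simps)
  finally show "act p q (pgx x) f v = 0" .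
qed

definition Jset :: "(bool list \<Rightarrow> 'a) set" where
  "Jset = {g \<in> carrier free_alg2. \<forall>f\<in>Vset. act p q g f = (\<lambda>v. 0)}"

lemma Jset_ideal: "ideal Jset free_alg2"
proof (rule idealI[OF FA_ring])
  show "subgroup Jset (add_monoid free_alg2)"
  proof (rule subgroup.intro)
    show "Jset \<subseteq> carrier (add_monoid free_alg2)" by (auto simp: Jset_def)
    show "\<one>\<^bsub>add_monoid free_alg2\<^esub> \<in> Jset"
      by (simp add: Jset_def FA_defs act_zero_left fsupp_def)
    fix x y assume x: "x \<in> Jset" and y: "y \<in> Jset"
    show "x \<otimes>\<^bsub>add_monoid free_alg2\<^esub> y \<in> Jset"
    proof -
      have xc: "finite (fsupp x)" and yc: "finite (fsupp y)" using x y by (auto simp: Jset_def FA_carrier)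
      have "finite (fsupp (\<lambda>w. x w + y w))" using xc yc fsupp_add[of x y] by (meson finite_UnI finite_subset)
      then show ?thesis using x y xc yc by (auto simp: Jset_def FA_defs act_add)
    qed
    show "inv\<^bsub>add_monoid free_alg2\<^esub> x \<in> Jset"
    proof -
      have xc: "x \<in> carrier free_alg2" using x by (auto simp: Jset_def)
      have "inv\<^bsub>add_monoid free_alg2\<^esub> x = (\<lambda>w. - x w)"
        using FA_a_inv[OF xc] by (simp add: a_inv_def)
      moreover have "(\<lambda>w. - x w) \<in> carrier free_alg2" using xc by (simp add: FA_carrier fsupp_def)
      ultimately show ?thesis using x by (auto simp: Jset_def act_neg)
    qed
  qed
next
  fix a x :: "bool list \<Rightarrow> 'a" assume a: "a \<in> Jset" and x: "x \<in> carrier free_alg2"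
  have ac: "finite (fsupp a)" and xc: "finite (fsupp x)" using a x by (auto simp: Jset_def FA_carrier)
  show "x \<otimes>\<^bsub>free_alg2\<^esub> a \<in> Jset"
    using a ac xc by (auto simp: Jset_def FA_defs act_mult finite_fmul act_zero_right)
  show "a \<otimes>\<^bsub>free_alg2\<^esub> x \<in> Jset"
    using a ac xc by (auto simp: Jset_def FA_defs act_mult finite_fmul act_Vset)
qed

lemma W_ideal_eq: "W_ideal p q = genideal free_alg2 {pgx True, pgx False}"
  by (simp add: W_ideal_def pgx_def)

lemma W_ideal_ideal: "ideal (W_ideal p q) free_alg2"
  unfolding W_ideal_eq by (rule ring.genideal_ideal[OF FA_ring]) (simp add: pgx_carrier)

lemma W_ideal_J: "W_ideal p q \<subseteq> Jset"
  unfolding W_ideal_eq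
  by (rule ring.genideal_minimal[OF FA_ring Jset_ideal]) (auto simp: Jset_def pgx_carrier act_pgx)

lemma W_ideal_act: "g \<in> W_ideal p q \<Longrightarrow> f \<in> Vset \<Longrightarrow> act p q g f = (\<lambda>v. 0)"
  using W_ideal_J by (auto simp: Jset_def)

end

lemma fmul_dl_left: "fmul (dl u) h = (\<lambda>v. if take (length u) v = u then h (drop (length u) v) else (0::'a::comm_ring_1))"
proof
  fix v
  show "fmul (dl u) h v = (if take (length u) v = u then h (drop (length u) v) else 0)"
  proof (cases "take (length u) v = u")
    case True
    have sub: "{(u, drop (length u) v)} \<subseteq> splits v"
      using True by (simp add: splits_def) (metis append_take_drop_id)
    have z: "\<forall>x\<in>splits v - {(u, drop (length u) v)}. (case x of (a,b) \<Rightarrow> dl u a * h b) = 0"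
    proof
      fix x assume x: "x \<in> splits v - {(u, drop (length u) v)}"
      obtain a b where ab: "x = (a,b)" by fastforce
      have "a @ b = v" using x ab by (simp add: splits_def)
      then have "a \<noteq> u" using x ab by auto
      then show "(case x of (a,b) \<Rightarrow> dl u a * h b) = 0" using ab by (simp add: dl_def)
    qed
    have "(\<Sum>(a,b)\<in>splits v. dl u a * h b) = (\<Sum>(a,b)\<in>{(u, drop (length u) v)}. dl u a * h b)"
      by (rule sum.mono_neutral_right[OF finite_splits sub z])
    then show ?thesis using True by (simp add: fmul_def dl_def)
  next
    case False
    have "(\<Sum>(a,b)\<in>splits v. dl u a * h b) = 0"
      by (rule sum.neutral) (use False in \<open>force simp: splits_def dl_def\<close>)
    then show ?thesis using False by (simp add: fmul_def)
  qed
qed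

lemma dl_Cons: "dl (x # w) = (fmul (dl [x]) (dl w) :: bool list \<Rightarrow> 'a::comm_ring_1)"
proof
  fix v show "dl (x # w) v = (fmul (dl [x]) (dl w) :: bool list \<Rightarrow> 'a) v"
    unfolding fmul_dl_left by (cases v) (auto simp: dl_def)
qed

lemma fmul_smult_left: "fmul (\<lambda>w. c * f w) g = (\<lambda>v. c * fmul f g v)"
  by (simp add: fmul_def sum_distrib_left split_def mult.assoc)

lemma fmul_smult_right: "fmul f (\<lambda>w. c * g w) = (\<lambda>v. c * fmul f g v)"
  by (simp add: fmul_def sum_distrib_left split_def mult.left_commute)

lemma fmul_minus_right: "fmul h (\<lambda>w. f w - g w) = (\<lambda>v. fmul h f v - fmul h g v)"
  by (simp add: fmul_def right_diff_distrib sum_subtractf split_def)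

lemma lact_dl: "alt (x # v) \<Longrightarrow> lact p q x (dl v) = dl (x # v)"
  by (auto simp: lact_def dl_def fun_eq_iff alt_Cons split: list.splits)

lemma lword_dl: "alt (w @ u) \<Longrightarrow> lword p q w (dl u) = dl (w @ u)"
proof (induction w)
  case (Cons x w)
  then have "alt (w @ u)" by (simp add: alt_Cons)
  with Cons show ?case by (simp add: lact_dl)
qed simp

definition rho :: "'a::field poly \<Rightarrow> 'a poly \<Rightarrow> (bool list \<Rightarrow> 'a) \<Rightarrow> bool list \<Rightarrow> 'a" where
  "rho p q g = act p q g (dl [])"

lemma rho_V: assumes f: "f \<in> Vset" shows "rho p q f = f"
proof
  fix v
  have "rho p q f v = (\<Sum>w\<in>fsupp f. f w * dl w v)"
    unfolding rho_def act_def
  proof (intro sum.cong refl)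
    fix w assume "w \<in> fsupp f"
    then have "alt w" using VsetD[OF f] by (auto simp: fsupp_def)
    then show "f w * lword p q w (dl []) v = f w * dl w v" using lword_dl[of w "[]" p q] by simp
  qed
  also have "\<dots> = f v"
  proof (cases "v \<in> fsupp f")
    case True
    have "(\<Sum>w\<in>fsupp f. f w * dl w v) = (\<Sum>w\<in>fsupp f. if w = v then f w else 0)"
      by (intro sum.cong) (auto simp: dl_def)
    then show ?thesis using Vset_fin[OF f] True by (simp add: sum.delta)
  next
    case False
    then show ?thesis by (auto simp: dl_def fsupp_def intro!: sum.neutral)
  qed
  finally show "rho p q f v = f v" .
qed

lemma rho_Vset: "finite (fsupp g) \<Longrightarrow> rho p q g \<in> (Vset :: (bool list \<Rightarrow> 'a::field) set)"
  unfolding rho_def by (rule act_Vset) (simp_all add: Vset_dl)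

context wpq
begin

abbreviation II where "II \<equiv> W_ideal p q"

lemma II_carrier: "a \<in> II \<Longrightarrow> finite (fsupp a)"
  using additive_subgroup.a_subset[OF ideal.axioms(1)[OF W_ideal_ideal]] by (auto simp: FA_carrier)

lemma II_add: "a \<in> II \<Longrightarrow> b \<in> II \<Longrightarrow> (\<lambda>v. a v + b v) \<in> II"
  using additive_subgroup.a_closed[OF ideal.axioms(1)[OF W_ideal_ideal]] by (simp add: FA_defs)

lemma II_zero: "(\<lambda>v. 0) \<in> II"
  using additive_subgroup.zero_closed[OF ideal.axioms(1)[OF W_ideal_ideal]] by (simp add: FA_defs)

lemma II_lmul: "a \<in> II \<Longrightarrow> finite (fsupp g) \<Longrightarrow> fmul g a \<in> II"
  using ideal.I_l_closed[OF W_ideal_ideal, of a g] by (simp add: FA_defs)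

lemma II_rmul: "a \<in> II \<Longrightarrow> finite (fsupp g) \<Longrightarrow> fmul a g \<in> II"
  using ideal.I_r_closed[OF W_ideal_ideal, of a g] by (simp add: FA_defs)

lemma II_smult: "a \<in> II \<Longrightarrow> (\<lambda>v. c * a v) \<in> II"
proof -
  assume a: "a \<in> II"
  have "fmul (\<lambda>w. c * dl [] w) a \<in> II"
    by (rule II_lmul[OF a]) (auto simp: fsupp_def dl_def)
  then show ?thesis by (simp add: fmul_smult_left fmul_one_left)
qed

lemma II_minus: "a \<in> II \<Longrightarrow> b \<in> II \<Longrightarrow> (\<lambda>v. a v - b v) \<in> II"
  using II_add[of a "\<lambda>v. (-1) * b v"] II_smult[of b "-1"] by simp

lemma pgx_II: "pgx x \<in> II"
  using ring.genideal_self[OF FA_ring, of "{pgx True, pgx False}"] pgx_carrier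
  unfolding W_ideal_eq by (cases x) auto

lemma pgx_expand: "pgx x = (\<lambda>w. cf p q x 0 * dl [] w + cf p q x 1 * dl [x] w + dl [x,x] w)"
proof
  fix w
  show "pgx x w = cf p q x 0 * dl [] w + cf p q x 1 * dl [x] w + dl [x,x] w"
  proof (cases "w \<in> {[], [x], [x,x]}")
    case True
    then show ?thesis using cf2[of x]
      by (auto simp: pgx_def poly_gen_def cf_def dl_def numeral_2_eq_2)
  next
    case False
    then have "pgx x w = 0" using pgx_fsupp[of x] by (auto simp: fsupp_def)
    then show ?thesis using False by (auto simp: dl_def)
  qed
qed

end

context wpq begin
lemma base_step:
  assumes h: "h \<in> Vset"
  shows "(\<lambda>v. fmul (dl [x]) h v - lact p q x h v) \<in> II"
proof -
  define h' where "h' = (\<lambda>w'. if w' = [] \<or> hd w' \<noteq> x then h (x # w') else 0)"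
  have "fsupp h' \<subseteq> tl ` fsupp h"
  proof
    fix w assume "w \<in> fsupp h'"
    then have "x # w \<in> fsupp h" by (auto simp: h'_def fsupp_def split: if_splits)
    then show "w \<in> tl ` fsupp h" by (metis image_eqI list.sel(3))
  qed
  then have h'f: "finite (fsupp h')" using Vset_fin[OF h] by (meson finite_imageI finite_subset)
  have "fmul (pgx x) h' \<in> II" by (rule II_rmul[OF pgx_II h'f])
  moreover have "fmul (pgx x) h' = (\<lambda>v. fmul (dl [x]) h v - lact p q x h v)"
  proof
    fix v
    have e: "fmul (pgx x) h' v = cf p q x 0 * h' v + cf p q x 1 * fmul (dl [x]) h' v + fmul (dl [x,x]) h' v"
      unfolding pgx_expand by (simp add: fmul_add_left fmul_smult_left fmul_one_left)
    show "fmul (pgx x) h' v = fmul (dl [x]) h v - lact p q x h v"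
    proof (cases v)
      case Nil
      then show ?thesis unfolding e by (simp add: fmul_dl_left h'_def lact_def)
    next
      case (Cons y w)
      show ?thesis
      proof (cases "y = x")
        case True
        show ?thesis
        proof (cases w)
          case Nil
          then show ?thesis unfolding e using Cons True by (simp add: fmul_dl_left h'_def lact_def)
        next
          case (Cons z w')
          show ?thesis
          proof (cases "z = x")
            case True
            have "h (x # w') = 0" if "w' \<noteq> []" "hd w' = x"
              using VsetD[OF h, of "x # w'"] that by (cases w') auto
            then show ?thesis unfolding e using Cons \<open>v = y # w\<close> \<open>y = x\<close> True
              by (auto simp: fmul_dl_left h'_def lact_def)
          next
            case False
            then show ?thesis unfolding e using Cons \<open>v = y # w\<close> \<open>y = x\<close>
              by (auto simp: fmul_dl_left h'_def lact_def)
          qed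
        qed
      next
        case False
        then show ?thesis unfolding e using Cons by (auto simp: fmul_dl_left h'_def lact_def)
      qed
    qed
  qed
  ultimately show ?thesis by simp
qed

lemma word_step: "f \<in> Vset \<Longrightarrow> (\<lambda>v. fmul (dl w) f v - lword p q w f v) \<in> II"
proof (induction w arbitrary: f)
  case Nil
  then show ?case using II_zero by (simp add: fmul_one_left)
next
  case (Cons x w)
  have fin1: "finite (fsupp (dl [x] :: bool list \<Rightarrow> 'a))" by (simp add: fsupp_def dl_def)
  have A: "fmul (dl [x]) (\<lambda>v. fmul (dl w) f v - lword p q w f v) \<in> II"
    by (rule II_lmul[OF Cons.IH[OF Cons.prems] fin1])
  have B: "(\<lambda>v. fmul (dl [x]) (lword p q w f) v - lact p q x (lword p q w f) v) \<in> II"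
    by (rule base_step[OF lword_Vset[OF Cons.prems]])
  have "(\<lambda>v. fmul (dl (x # w)) f v - lword p q (x # w) f v)
      = (\<lambda>v. fmul (dl [x]) (\<lambda>v. fmul (dl w) f v - lword p q w f v) v +
             (fmul (dl [x]) (lword p q w f) v - lact p q x (lword p q w f) v))"
    by (subst dl_Cons[of x w]) (simp add: fmul_assoc fmul_minus_right)
  then show ?case using II_add[OF A B] by simp
qed

lemma gen_step:
  assumes f: "f \<in> Vset" and S: "finite S"
  shows "(\<lambda>v. fmul (\<lambda>u. \<Sum>w\<in>S. c w * dl w u) f v - act p q (\<lambda>u. \<Sum>w\<in>S. c w * dl w u) f v) \<in> II"
  using S
proof (induction S rule: finite_induct)
  case empty
  then show ?case using II_zero by (simp add: act_zero_left fmul_def)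
next
  case (insert w S)
  let ?G = "\<lambda>u. \<Sum>w\<in>S. c w * dl w u"
  have finG: "finite (fsupp ?G)"
  proof -
    have "fsupp ?G \<subseteq> S"
      by (auto simp: fsupp_def dl_def) (metis (mono_tags, lifting) mult_zero_right sum.neutral)
    then show ?thesis using insert(1) by (rule finite_subset)
  qed
  have find: "finite (fsupp (\<lambda>u. c w * dl w u))" by (rule finite_subset[of _ "{w}"]) (auto simp: fsupp_def dl_def)
  have eq: "(\<lambda>u. \<Sum>w\<in>insert w S. c w * dl w u) = (\<lambda>u. c w * dl w u + ?G u)"
    using insert by simp
  have "(\<lambda>v. c w * (fmul (dl w) f v - lword p q w f v)) \<in> II"
    by (rule II_smult[OF word_step[OF f]])
  from II_add[OF this insert(3)]
  show ?case unfolding eq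
    by (simp add: fmul_add_left act_add[OF find finG] fmul_smult_left act_smult act_dl algebra_simps)
qed

lemma span: assumes g: "finite (fsupp g)" shows "(\<lambda>v. g v - rho p q g v) \<in> II"
proof -
  have geq: "g = (\<lambda>u. \<Sum>w\<in>fsupp g. g w * dl w u)"
  proof
    fix u
    have "(\<Sum>w\<in>fsupp g. g w * dl w u) = (\<Sum>w\<in>fsupp g. if w = u then g w else 0)"
      by (intro sum.cong) (auto simp: dl_def)
    then show "g u = (\<Sum>w\<in>fsupp g. g w * dl w u)"
      using g by (cases "u \<in> fsupp g") (auto simp: sum.delta fsupp_def)
  qed
  have "(\<lambda>v. fmul g (dl []) v - act p q g (dl []) v) \<in> II"
    by (subst (1 2) geq) (rule gen_step[OF Vset_dl g], simp)
  then show ?thesis by (simp add: fmul_one_right rho_def)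
qed

end

context wpq begin

abbreviation WW where "WW \<equiv> W_alg p q"

definition cl :: "(bool list \<Rightarrow> 'a) \<Rightarrow> (bool list \<Rightarrow> 'a) set" where
  "cl g = II +>\<^bsub>free_alg2\<^esub> g"

lemma W_ring: "ring WW"
  unfolding W_alg_def by (rule ideal.quotient_is_ring[OF W_ideal_ideal])

lemma W_carrier: "carrier WW = cl ` carrier free_alg2"
  unfolding W_alg_def FactRing_def cl_def by (auto simp: A_RCOSETS_def')

lemma cl_in: "finite (fsupp g) \<Longrightarrow> cl g \<in> carrier WW"
  using W_carrier by (auto simp: FA_carrier)

lemma W_carrierE: "U \<in> carrier WW \<Longrightarrow> (\<And>g. finite (fsupp g) \<Longrightarrow> U = cl g \<Longrightarrow> thesis) \<Longrightarrow> thesis"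
  using W_carrier by (auto simp: FA_carrier)

lemma cl_mult: "finite (fsupp g) \<Longrightarrow> finite (fsupp h) \<Longrightarrow> cl g \<otimes>\<^bsub>WW\<^esub> cl h = cl (fmul g h)"
  using ring_hom_mult[OF ideal.rcos_ring_hom[OF W_ideal_ideal], of g h]
  by (simp add: cl_def W_alg_def FA_defs)

lemma cl_add: "finite (fsupp g) \<Longrightarrow> finite (fsupp h) \<Longrightarrow> cl g \<oplus>\<^bsub>WW\<^esub> cl h = cl (\<lambda>w. g w + h w)"
  using ring_hom_add[OF ideal.rcos_ring_hom[OF W_ideal_ideal], of g h]
  by (simp add: cl_def W_alg_def FA_defs)

lemma cl_one: "\<one>\<^bsub>WW\<^esub> = cl (dl [])"
  by (simp add: W_alg_def FactRing_def cl_def FA_defs)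

lemma cl_zero: "\<zero>\<^bsub>WW\<^esub> = cl (\<lambda>w. 0)"
  using ring_hom_zero[OF ideal.rcos_ring_hom[OF W_ideal_ideal] FA_ring ideal.quotient_is_ring[OF W_ideal_ideal]]
  by (simp add: cl_def W_alg_def FA_defs)

lemma cl_eq: "finite (fsupp g) \<Longrightarrow> finite (fsupp h) \<Longrightarrow> cl g = cl h \<longleftrightarrow> (\<lambda>w. g w - h w) \<in> II"
  using ring.quotient_eq_iff_same_a_r_cos[OF FA_ring W_ideal_ideal, of g h]
  by (simp add: cl_def FA_minus FA_carrier)

lemma rho_add: "finite (fsupp g) \<Longrightarrow> finite (fsupp h) \<Longrightarrow> rho p q (\<lambda>w. g w + h w) = (\<lambda>v. rho p q g v + rho p q h v)"
  by (simp add: rho_def act_add)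

lemma rho_II: "a \<in> II \<Longrightarrow> rho p q a = (\<lambda>v. 0)"
  by (simp add: rho_def W_ideal_act Vset_dl)

lemma act_II: "a \<in> II \<Longrightarrow> F \<in> Vset \<Longrightarrow> act p q a F = (\<lambda>v. 0)"
  by (simp add: W_ideal_act)

lemma fin_minus: fixes g h :: "bool list \<Rightarrow> 'a" shows "finite (fsupp g) \<Longrightarrow> finite (fsupp h) \<Longrightarrow> finite (fsupp (\<lambda>w. g w - h w))"
  by (rule finite_subset[of _ "fsupp g \<union> fsupp h"]) (auto simp: fsupp_def)

lemma act_diff_zero:
  assumes g: "finite (fsupp g)" and h: "finite (fsupp h)" and z: "act p q (\<lambda>w. g w - h w) F = (\<lambda>v. 0)"
  shows "act p q g F = act p q h F"
proof -
  have "act p q (\<lambda>w. (g w - h w) + h w) F = (\<lambda>v. act p q (\<lambda>w. g w - h w) F v + act p q h F v)"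
    by (rule act_add[OF fin_minus[OF g h] h])
  then show ?thesis using z by simp
qed

lemma rho_cl_eq: assumes g: "finite (fsupp g)" and h: "finite (fsupp h)" and e: "cl g = cl h"
  shows "rho p q g = rho p q h"
proof -
  have "(\<lambda>w. g w - h w) \<in> II" using cl_eq[OF g h] e by simp
  then have "act p q (\<lambda>w. g w - h w) (dl []) = (\<lambda>v. 0)" by (rule act_II) (simp add: Vset_dl)
  then show ?thesis unfolding rho_def by (rule act_diff_zero[OF g h])
qed

lemma rho_fin: "finite (fsupp g) \<Longrightarrow> finite (fsupp (rho p q g))"
  using rho_Vset Vset_fin by blast

lemma cl_rho: assumes g: "finite (fsupp g)" shows "cl (rho p q g) = cl g"
proof -
  have "(\<lambda>w. g w - rho p q g w) \<in> II" by (rule span[OF g])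
  then have "cl g = cl (rho p q g)" using cl_eq[OF g rho_fin[OF g]] by simp
  then show ?thesis by simp
qed

definition rep :: "(bool list \<Rightarrow> 'a) set \<Rightarrow> bool list \<Rightarrow> 'a" where
  "rep U = rho p q (SOME g. finite (fsupp g) \<and> U = cl g)"

lemma rep_cl: assumes "finite (fsupp g)" shows "rep (cl g) = rho p q g"
proof -
  have ex: "\<exists>g'. finite (fsupp g') \<and> cl g = cl g'" using assms by blast
  have "finite (fsupp (SOME g'. finite (fsupp g') \<and> cl g = cl g')) \<and> cl g = cl (SOME g'. finite (fsupp g') \<and> cl g = cl g')"
    by (rule someI_ex[OF ex])
  then show ?thesis unfolding rep_def using rho_cl_eq assms by metis
qed

lemma rep_V: "f \<in> Vset \<Longrightarrow> rep (cl f) = f"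
  by (simp add: rep_cl Vset_fin rho_V)

lemma rep_Vset: "U \<in> carrier WW \<Longrightarrow> rep U \<in> Vset"
  by (metis W_carrierE rep_cl rho_Vset)

lemma cl_rep: "U \<in> carrier WW \<Longrightarrow> cl (rep U) = U"
  by (metis W_carrierE cl_rho rep_cl)

lemma rep_inj: "U \<in> carrier WW \<Longrightarrow> V \<in> carrier WW \<Longrightarrow> rep U = rep V \<Longrightarrow> U = V"
  by (metis cl_rep)

lemma act_rho: assumes g: "finite (fsupp g)" and F: "F \<in> Vset" shows "act p q g F = act p q (rho p q g) F"
proof (rule act_diff_zero[OF g rho_fin[OF g]])
  have "(\<lambda>w. g w - rho p q g w) \<in> II" by (rule span[OF g])
  then show "act p q (\<lambda>w. g w - rho p q g w) F = (\<lambda>v. 0)" using F by (rule act_II)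
qed

lemma rep_mult: assumes U: "U \<in> carrier WW" and V: "V \<in> carrier WW"
  shows "rep (U \<otimes>\<^bsub>WW\<^esub> V) = act p q (rep U) (rep V)"
proof -
  obtain g where g: "finite (fsupp g)" "U = cl g" using U W_carrierE by blast
  obtain h where h: "finite (fsupp h)" "V = cl h" using V W_carrierE by blast
  have "rep (U \<otimes>\<^bsub>WW\<^esub> V) = rho p q (fmul g h)"
    using g h by (simp add: cl_mult rep_cl finite_fmul)
  also have "\<dots> = act p q g (rho p q h)" by (simp add: rho_def act_mult g h)
  also have "\<dots> = act p q (rho p q g) (rho p q h)" by (rule act_rho[OF g(1) rho_Vset[OF h(1)]])
  finally show ?thesis using g h by (simp add: rep_cl)
qed

lemma rep_add: assumes U: "U \<in> carrier WW" and V: "V \<in> carrier WW"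
  shows "rep (U \<oplus>\<^bsub>WW\<^esub> V) = (\<lambda>v. rep U v + rep V v)"
proof -
  obtain g where g: "finite (fsupp g)" "U = cl g" using U W_carrierE by blast
  obtain h where h: "finite (fsupp h)" "V = cl h" using V W_carrierE by blast
  have fs: "finite (fsupp (\<lambda>w. g w + h w))" using g h fsupp_add[of g h] by (meson finite_UnI finite_subset)
  show ?thesis using g h by (simp add: cl_add rep_cl rho_add fs)
qed

lemma rep_one: "rep \<one>\<^bsub>WW\<^esub> = dl []"
  by (simp add: cl_one rep_V Vset_dl)

lemma rep_zero: "rep \<zero>\<^bsub>WW\<^esub> = (\<lambda>v. 0)"
  by (simp add: cl_zero rep_V Vset_zero)

lemma one_neq_zero: "\<one>\<^bsub>WW\<^esub> \<noteq> \<zero>\<^bsub>WW\<^esub>"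
  using rep_one rep_zero by (metis dl_def one_neq_zero)

end

definition bnd :: "nat \<Rightarrow> (bool list \<Rightarrow> 'a::zero) \<Rightarrow> bool" where
  "bnd n f \<longleftrightarrow> (\<forall>w. n < length w \<longrightarrow> f w = 0)"

lemma bnd_mono: "bnd n f \<Longrightarrow> n \<le> m \<Longrightarrow> bnd m f"
  by (simp add: bnd_def)

lemma lact_top:
  assumes g: "bnd k g"
  shows "bnd (Suc k) (lact p q x g)"
    and "\<And>w. length w = Suc k \<Longrightarrow> alt w \<Longrightarrow> lact p q x g w = (if hd w = x then g (tl w) else 0)"
proof -
  show "bnd (Suc k) (lact p q x g)"
    unfolding bnd_def
  proof (intro allI impI)
    fix w :: "bool list" assume w: "Suc k < length w"
    then obtain y w' where ww: "w = y # w'" by (cases w) auto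
    then show "lact p q x g w = 0" using g w by (auto simp: lact_def bnd_def)
  qed
  fix w :: "bool list" assume w: "length w = Suc k" and a: "alt w"
  then obtain y w' where ww: "w = y # w'" by (cases w) auto
  have gw: "g w = 0" using g w by (simp add: bnd_def)
  have gx: "g (x # w) = 0" using g w by (simp add: bnd_def)
  show "lact p q x g w = (if hd w = x then g (tl w) else 0)"
    using a ww gw gx by (auto simp: lact_def alt_Cons)
qed

lemma lword_top:
  assumes f: "bnd m f"
  shows "bnd (length u + m) (lword p q u f) \<and>
    (\<forall>w. length w = length u + m \<longrightarrow> alt w \<longrightarrow>
       lword p q u f w = (if take (length u) w = u then f (drop (length u) w) else 0))"
proof (induction u)
  case Nil
  then show ?case using f by (simp add: bnd_def)
next
  case (Cons x u)
  have b: "bnd (length u + m) (lword p q u f)" using Cons by simp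
  have "bnd (Suc (length u + m)) (lact p q x (lword p q u f))" by (rule lact_top(1)[OF b])
  moreover have "lword p q (x # u) f w = (if take (length (x # u)) w = x # u then f (drop (length (x # u)) w) else 0)"
    if w: "length w = length (x # u) + m" and a: "alt w" for w
  proof -
    obtain y w' where ww: "w = y # w'" using w by (cases w) auto
    have a': "alt w'" using a ww by (simp add: alt_Cons)
    have "lact p q x (lword p q u f) w = (if hd w = x then lword p q u f (tl w) else 0)"
      by (rule lact_top(2)[OF b]) (use w a in auto)
    then have "lword p q (x # u) f w = (if y = x then lword p q u f w' else 0)"
      using ww by simp
    also have "\<dots> = (if take (length (x # u)) w = x # u then f (drop (length (x # u)) w) else 0)"
      using Cons a' w ww by auto
    finally show ?thesis .
  qed
  ultimately show ?case by simp
qed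

lemma act_top:
  assumes gf: "finite (fsupp g)" and g: "bnd n g" and f: "bnd m f"
  shows "bnd (n + m) (act p q g f)"
    and "\<And>w. length w = n + m \<Longrightarrow> alt w \<Longrightarrow> act p q g f w = g (take n w) * f (drop n w)"
proof -
  have un: "length u \<le> n" if "u \<in> fsupp g" for u
    using that g by (auto simp: fsupp_def bnd_def) (meson not_le)
  show "bnd (n + m) (act p q g f)"
    unfolding bnd_def
  proof (intro allI impI)
    fix w :: "bool list" assume w: "n + m < length w"
    have "g u * lword p q u f w = 0" if "u \<in> fsupp g" for u
    proof -
      have "bnd (length u + m) (lword p q u f)" using lword_top[OF f] by blast
      then show ?thesis using un[OF that] w by (simp add: bnd_def)
    qed
    then show "act p q g f w = 0" by (auto simp: act_def intro!: sum.neutral)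
  qed
  fix w :: "bool list" assume w: "length w = n + m" and a: "alt w"
  have t: "g u * lword p q u f w = (if u = take n w then g u * f (drop n w) else 0)" if u: "u \<in> fsupp g" for u
  proof (cases "length u = n")
    case True
    then show ?thesis using lword_top[OF f, of u] w a by auto
  next
    case False
    then have "length u < n" using un[OF u] by simp
    moreover have "bnd (length u + m) (lword p q u f)" using lword_top[OF f] by blast
    ultimately have "lword p q u f w = 0" using w by (simp add: bnd_def)
    moreover have "u \<noteq> take n w" using False w by auto
    ultimately show ?thesis by simp
  qed
  have "act p q g f w = (\<Sum>u\<in>fsupp g. if u = take n w then g u * f (drop n w) else 0)"
    unfolding act_def by (rule sum.cong) (simp_all add: t)
  also have "\<dots> = g (take n w) * f (drop n w)"
    using gf by (simp add: sum.delta' fsupp_def)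
  finally show "act p q g f w = g (take n w) * f (drop n w)" .
qed

lemma alt_append: "alt (u @ v) \<longleftrightarrow> alt u \<and> alt v \<and> (u = [] \<or> v = [] \<or> last u \<noteq> hd v)"
  by (induction u) (auto simp: alt_Cons)

lemma alt_snoc: "alt (u @ [a]) \<longleftrightarrow> alt u \<and> (u = [] \<or> last u \<noteq> a)"
  by (simp add: alt_append)

lemma alt_unique: "alt v \<Longrightarrow> alt w \<Longrightarrow> length v = length w \<Longrightarrow> v \<noteq> [] \<Longrightarrow> last v = last w \<Longrightarrow> v = w"
proof (induction v arbitrary: w rule: rev_induct)
  case Nil then show ?case by simp
next
  case (snoc a v)
  obtain w' b where ww: "w = w' @ [b]" using snoc.prems(4,3) by (metis length_0_conv rev_exhaust)
  have ab: "a = b" using snoc.prems(5) ww by simp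
  have lv: "length v = length w'" using snoc.prems(3) ww by simp
  show ?case
  proof (cases "v = []")
    case True then show ?thesis using lv ww ab by simp
  next
    case False
    then have "w' \<noteq> []" using lv by auto
    have "alt v" "last v \<noteq> a" using snoc.prems(1) False by (auto simp: alt_snoc)
    moreover have "alt w'" "last w' \<noteq> b" using snoc.prems(2) ww \<open>w' \<noteq> []\<close> by (auto simp: alt_snoc)
    ultimately have "v = w'" using snoc.IH[of w'] lv False ab by simp
    then show ?thesis using ww ab by simp
  qed
qed

definition wsf :: "bool \<Rightarrow> 'a::field \<Rightarrow> 'a \<Rightarrow> bool list \<Rightarrow> 'a" where
  "wsf c \<alpha> \<beta> = (\<lambda>w. if w = [] then \<alpha> else if w = [c] then \<beta> else 0)"

lemma wsf_fsupp: "fsupp (wsf c \<alpha> \<beta>) \<subseteq> {[], [c]}"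
  by (auto simp: wsf_def fsupp_def split: if_splits)

lemma wsf_fin: "finite (fsupp (wsf c \<alpha> \<beta>))"
proof (rule finite_subset)
  show "fsupp (wsf c \<alpha> \<beta>) \<subseteq> {[], [c]}" by (rule wsf_fsupp)
qed simp

lemma wsf_V: "wsf c \<alpha> \<beta> \<in> Vset"
proof -
  have "\<forall>w. wsf c \<alpha> \<beta> w \<noteq> 0 \<longrightarrow> alt w" by (auto simp: wsf_def)
  then show ?thesis using wsf_fin by (simp add: Vset_def)
qed

lemma wsf_bnd: "bnd 1 (wsf c \<alpha> \<beta>)"
  by (auto simp: bnd_def wsf_def)

lemma wsf_single: "wsf c \<alpha> \<beta> [x] = (if x = c then \<beta> else 0)"
  by (simp add: wsf_def)

lemma wsf_sc: "wsf c \<alpha> 0 = (\<lambda>v. \<alpha> * dl [] v)"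
  by (auto simp: wsf_def dl_def fun_eq_iff)

lemma act_wsf: "act p q (wsf c \<alpha> \<beta>) F = (\<lambda>v. \<alpha> * F v + \<beta> * lact p q c F v)"
proof
  fix v
  have "act p q (wsf c \<alpha> \<beta>) F v = (\<Sum>w\<in>{[], [c]}. wsf c \<alpha> \<beta> w * lword p q w F v)"
    by (rule act_superset[OF _ wsf_fsupp]) simp
  then show "act p q (wsf c \<alpha> \<beta>) F v = \<alpha> * F v + \<beta> * lact p q c F v"
    by (simp add: wsf_def)
qed

lemma lact_wsf: "lact p q c (wsf c \<gamma> \<epsilon>) = wsf c (- cf p q c 0 * \<epsilon>) (\<gamma> - cf p q c 1 * \<epsilon>)"
  by (auto simp: lact_def wsf_def fun_eq_iff split: list.splits)

lemma act_wsf_wsf: "act p q (wsf c \<alpha> \<beta>) (wsf c \<gamma> \<epsilon>) =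
   wsf c (\<alpha> * \<gamma> - \<beta> * \<epsilon> * cf p q c 0) (\<alpha> * \<epsilon> + \<beta> * \<gamma> - \<beta> * \<epsilon> * cf p q c 1)"
  unfolding act_wsf lact_wsf by (auto simp: fun_eq_iff wsf_def algebra_simps)

context wpq begin

definition ws :: "bool \<Rightarrow> 'a \<Rightarrow> 'a \<Rightarrow> (bool list \<Rightarrow> 'a) set" where
  "ws c \<alpha> \<beta> = cl (wsf c \<alpha> \<beta>)"

lemma ws_carrier[simp]: "ws c \<alpha> \<beta> \<in> carrier WW"
  by (simp add: ws_def cl_in wsf_fin)

lemma rep_ws: "rep (ws c \<alpha> \<beta>) = wsf c \<alpha> \<beta>"
  by (simp add: ws_def rep_V wsf_V)

lemma W_sub_eq: "W_sub p q c = {ws c \<alpha> \<beta> | \<alpha> \<beta>. True}"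
  by (simp add: W_sub_def ws_def cl_def wsf_def)

lemma ws_mult: "ws c \<alpha> \<beta> \<otimes>\<^bsub>WW\<^esub> ws c \<gamma> \<epsilon> =
   ws c (\<alpha> * \<gamma> - \<beta> * \<epsilon> * cf p q c 0) (\<alpha> * \<epsilon> + \<beta> * \<gamma> - \<beta> * \<epsilon> * cf p q c 1)"
  by (rule rep_inj) (simp_all add: ring.ring_simprules(5)[OF W_ring] rep_mult rep_ws act_wsf_wsf)

lemma ws_add: "ws c \<alpha> \<beta> \<oplus>\<^bsub>WW\<^esub> ws c \<gamma> \<epsilon> = ws c (\<alpha> + \<gamma>) (\<beta> + \<epsilon>)"
  by (rule rep_inj) (simp_all add: ring.ring_simprules(1)[OF W_ring] rep_add rep_ws, auto simp: wsf_def)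

lemma ws_sc: "ws c \<alpha> 0 = ws c' \<alpha> 0"
  by (simp add: ws_def wsf_sc)

lemma ws_one: "ws c 1 0 = \<one>\<^bsub>WW\<^esub>"
  by (simp add: ws_def wsf_sc cl_one)

lemma ws_zero: "ws c 0 0 = \<zero>\<^bsub>WW\<^esub>"
proof -
  have "wsf c 0 0 = (\<lambda>w. 0::'a)" by (simp add: wsf_def fun_eq_iff)
  then show ?thesis by (simp add: ws_def cl_zero)
qed

lemma rep_sc_mult: "U \<in> carrier WW \<Longrightarrow> rep (ws c \<alpha> 0 \<otimes>\<^bsub>WW\<^esub> U) = (\<lambda>v. \<alpha> * rep U v)"
  by (simp add: rep_mult rep_ws act_wsf)

lemma rep_mult_sc: assumes U: "U \<in> carrier WW" shows "rep (U \<otimes>\<^bsub>WW\<^esub> ws c \<alpha> 0) = (\<lambda>v. \<alpha> * rep U v)"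
proof -
  have "rep (U \<otimes>\<^bsub>WW\<^esub> ws c \<alpha> 0) = act p q (rep U) (\<lambda>v. \<alpha> * dl [] v)"
    using U by (simp add: rep_mult rep_ws wsf_sc)
  also have "\<dots> = (\<lambda>v. \<alpha> * rho p q (rep U) v)" by (simp add: act_smult_right rho_def)
  also have "\<dots> = (\<lambda>v. \<alpha> * rep U v)" using rho_V[OF rep_Vset[OF U]] by simp
  finally show ?thesis .
qed

lemma sc_central: "U \<in> carrier WW \<Longrightarrow> ws c \<alpha> 0 \<otimes>\<^bsub>WW\<^esub> U = U \<otimes>\<^bsub>WW\<^esub> ws c \<alpha> 0"
  by (rule rep_inj) (simp_all add: ring.ring_simprules(5)[OF W_ring] rep_sc_mult rep_mult_sc)

end

lemma bnd_exists: "finite (fsupp y) \<Longrightarrow> \<exists>m. bnd m y"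
proof -
  assume f: "finite (fsupp y)"
  then obtain m where m: "\<forall>l\<in>length ` fsupp y. l \<le> m"
    using finite_nat_set_iff_bounded_le by (meson finite_imageI)
  then have "bnd m y" by (auto simp: bnd_def fsupp_def)
  then show ?thesis by blast
qed

lemma take_drop_last: "length v = n \<Longrightarrow> n \<ge> 1 \<Longrightarrow> take (n - 1) v = butlast v \<and> drop (n - 1) v = [last v]"
  by (metis One_nat_def append_butlast_last_id append_eq_conv_conj diff_Suc_1 length_0_conv
      length_butlast not_one_le_zero)

lemma top_word:
  assumes x: "x \<in> Vset" and y: "y \<in> Vset" and xy: "act p q x y = dl []"
    and n: "n \<ge> 1" and bn: "bnd n x" and nb: "\<not> bnd (n - 1) x"
  shows "\<exists>d. \<forall>w1. alt w1 \<and> length w1 = n \<and> last w1 \<noteq> d \<longrightarrow> x w1 = 0"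
proof -
  have xf: "finite (fsupp x)" and yf: "finite (fsupp y)" using x y by (auto simp: Vset_fin)
  have ex: "\<exists>m. bnd m y" by (rule bnd_exists[OF yf])
  define m where "m = (LEAST m. bnd m y)"
  have bm: "bnd m y" unfolding m_def using ex by (meson LeastI_ex)
  have m_min: "\<not> bnd k y" if "k < m" for k using that unfolding m_def by (meson not_less_Least)
  show ?thesis
  proof (cases "m = 0")
    case True
    have "bnd (n - 1) x"
      unfolding bnd_def
    proof (intro allI impI)
      fix w :: "bool list" assume w: "n - 1 < length w"
      show "x w = 0"
      proof (cases "length w = n \<and> alt w")
        case True
        have wne: "w \<noteq> []" using True n by auto
        have "x w * y [] = act p q x y w"
          using act_top(2)[OF xf bn bm, of w] True \<open>m = 0\<close> by simp
        also have "\<dots> = 0" using xy wne by (simp add: dl_def)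
        finally have "x w * y [] = 0" .
        moreover have "y [] \<noteq> 0"
        proof
          assume "y [] = 0"
          then have "y = (\<lambda>v. 0)"
          proof -
            assume y0: "y [] = 0"
            have "y v = 0" for v using bm \<open>m = 0\<close> y0 by (cases v) (auto simp: bnd_def)
            then show ?thesis by auto
          qed
          then have "act p q x y = (\<lambda>v. 0)" by (simp add: act_zero_right)
          then show False using xy by (metis dl_def zero_neq_one)
        qed
        ultimately show ?thesis by simp
      next
        case False
        then show ?thesis using bn w VsetD[OF x] by (auto simp: bnd_def)
      qed
    qed
    then show ?thesis using nb by simp
  next
    case False
    then have "\<not> bnd (m - 1) y" using m_min by simp
    then obtain v where v1: "m - 1 < length v" and yv: "y v \<noteq> 0" by (auto simp: bnd_def)
    have "\<not> m < length v" using bm yv by (auto simp: bnd_def)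
    then have lv: "length v = m" using v1 False by linarith
    have av: "alt v" using VsetD[OF y yv] .
    have vne: "v \<noteq> []" using lv False by auto
    show ?thesis
    proof (intro exI allI impI)
      fix w1 assume w1: "alt w1 \<and> length w1 = n \<and> last w1 \<noteq> hd v"
      have a: "alt (w1 @ v)" using w1 av by (simp add: alt_append)
      have "act p q x y (w1 @ v) = x w1 * y v"
        using act_top(2)[OF xf bn bm, of "w1 @ v"] a w1 lv by simp
      moreover have "act p q x y (w1 @ v) = 0" using xy vne by (simp add: dl_def)
      ultimately show "x w1 = 0" using yv by simp
    qed
  qed
qed

context wpq begin

lemma P_expand: "(if c then p else q) = [:cf p q c 0, cf p q c 1, 1:]"
proof (rule poly_eqI)
  fix n show "coeff (if c then p else q) n = coeff [:cf p q c 0, cf p q c 1, 1:] n"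
    using cf2[of c] cf_big[of n c]
    by (cases n; cases "n - 1"; auto simp: cf_def numeral_2_eq_2 coeff_pCons split: nat.splits)
qed

lemma poly_P: "poly (if c then p else q) r = cf p q c 0 + cf p q c 1 * r + r * r"
  by (subst P_expand) (simp add: algebra_simps)

lemma Units_W: "U \<in> Units WW \<longleftrightarrow> U \<in> carrier WW \<and> (\<exists>V\<in>carrier WW. U \<otimes>\<^bsub>WW\<^esub> V = \<one>\<^bsub>WW\<^esub> \<and> V \<otimes>\<^bsub>WW\<^esub> U = \<one>\<^bsub>WW\<^esub>)"
  by (auto simp: Units_def)

lemma ws_unit:
  assumes N: "\<alpha> * \<alpha> - cf p q c 1 * \<alpha> * \<beta> + cf p q c 0 * \<beta> * \<beta> \<noteq> 0"
  shows "ws c \<alpha> \<beta> \<in> Units WW"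
    and "inv\<^bsub>WW\<^esub> (ws c \<alpha> \<beta>) = ws c ((\<alpha> - cf p q c 1 * \<beta>) / (\<alpha> * \<alpha> - cf p q c 1 * \<alpha> * \<beta> + cf p q c 0 * \<beta> * \<beta>))
        (- \<beta> / (\<alpha> * \<alpha> - cf p q c 1 * \<alpha> * \<beta> + cf p q c 0 * \<beta> * \<beta>))"
proof -
  define N where "N = \<alpha> * \<alpha> - cf p q c 1 * \<alpha> * \<beta> + cf p q c 0 * \<beta> * \<beta>"
  have N0: "N \<noteq> 0" using N by (simp add: N_def)
  let ?V = "ws c ((\<alpha> - cf p q c 1 * \<beta>) / N) (- \<beta> / N)"
  have c1: "\<alpha> * ((\<alpha> - cf p q c 1 * \<beta>) / N) - \<beta> * (- \<beta> / N) * cf p q c 0 = 1"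
  proof -
    have "\<alpha> * ((\<alpha> - cf p q c 1 * \<beta>) / N) - \<beta> * (- \<beta> / N) * cf p q c 0
        = (\<alpha> * (\<alpha> - cf p q c 1 * \<beta>) + \<beta> * \<beta> * cf p q c 0) / N"
      by (simp add: add_divide_distrib diff_divide_distrib algebra_simps)
    also have "\<dots> = N / N" by (simp add: N_def algebra_simps)
    finally show ?thesis using N0 by simp
  qed
  have c2: "\<alpha> * (- \<beta> / N) + \<beta> * ((\<alpha> - cf p q c 1 * \<beta>) / N) - \<beta> * (- \<beta> / N) * cf p q c 1 = 0"
  proof -
    have "\<alpha> * (- \<beta> / N) + \<beta> * ((\<alpha> - cf p q c 1 * \<beta>) / N) - \<beta> * (- \<beta> / N) * cf p q c 1
        = (\<alpha> * (- \<beta>) + \<beta> * (\<alpha> - cf p q c 1 * \<beta>) - \<beta> * (- \<beta>) * cf p q c 1) / N"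
      by (simp add: add_divide_distrib diff_divide_distrib algebra_simps)
    also have "\<dots> = 0" by (simp add: algebra_simps)
    finally show ?thesis .
  qed
  have e1: "ws c \<alpha> \<beta> \<otimes>\<^bsub>WW\<^esub> ?V = \<one>\<^bsub>WW\<^esub>"
    unfolding ws_mult ws_one[of c, symmetric] using c1 c2 by simp
  have e2: "?V \<otimes>\<^bsub>WW\<^esub> ws c \<alpha> \<beta> = \<one>\<^bsub>WW\<^esub>"
    unfolding ws_mult ws_one[of c, symmetric] using c1 c2 by (simp add: algebra_simps)
  show u: "ws c \<alpha> \<beta> \<in> Units WW" using e1 e2 by (auto simp: Units_W)
  have "inv\<^bsub>WW\<^esub> (ws c \<alpha> \<beta>) = ?V"
    using monoid.inv_char[OF ring.is_monoid[OF W_ring] _ _ e1 e2] by simp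
  then show "inv\<^bsub>WW\<^esub> (ws c \<alpha> \<beta>) = ws c ((\<alpha> - cf p q c 1 * \<beta>) / (\<alpha> * \<alpha> - cf p q c 1 * \<alpha> * \<beta> + cf p q c 0 * \<beta> * \<beta>))
        (- \<beta> / (\<alpha> * \<alpha> - cf p q c 1 * \<alpha> * \<beta> + cf p q c 0 * \<beta> * \<beta>))" by (simp add: N_def)
qed

end

context wpq begin
lemma descent:
  assumes noroot: "\<And>c r. poly (if c then p else q) r \<noteq> 0"
    and U: "U \<in> Units WW" and n: "n \<ge> 1" and bn: "bnd n (rep U)" and nb: "\<not> bnd (n - 1) (rep U)"
  shows "\<exists>k\<in>basic_units p q. bnd (n - 1) (rep (U \<otimes>\<^bsub>WW\<^esub> k))"
proof -
  obtain V where Uc: "U \<in> carrier WW" and Vc: "V \<in> carrier WW" and UV: "U \<otimes>\<^bsub>WW\<^esub> V = \<one>\<^bsub>WW\<^esub>"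
    using U by (auto simp: Units_W)
  define x where "x = rep U"
  have xV: "x \<in> Vset" using rep_Vset[OF Uc] by (simp add: x_def)
  have xf: "finite (fsupp x)" using xV by (simp add: Vset_fin)
  have xy: "act p q x (rep V) = dl []" using rep_mult[OF Uc Vc] UV rep_one by (simp add: x_def)
  obtain d where A: "\<And>w1. alt w1 \<Longrightarrow> length w1 = n \<Longrightarrow> last w1 \<noteq> d \<Longrightarrow> x w1 = 0"
    using top_word[OF xV rep_Vset[OF Vc] xy n bn[folded x_def] nb[folded x_def]] by blast
  obtain w where wl: "n - 1 < length w" and xw: "x w \<noteq> 0" using nb by (auto simp: bnd_def x_def)
  have "\<not> n < length w" using bn xw by (auto simp: bnd_def x_def)
  then have lw: "length w = n" using wl n by linarith
  have aw: "alt w" using VsetD[OF xV xw] .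
  have ld: "last w = d" using A[OF aw lw] xw by blast
  have wne: "w \<noteq> []" using lw n by auto
  define w' where "w' = butlast w"
  have ww: "w = w' @ [d]" using append_butlast_last_id[OF wne] ld by (simp add: w'_def)
  have aw': "alt w'" using aw ww by (simp add: alt_snoc)
  have uniq: "v = w" if "alt v" "length v = n" "last v = d" for v
  proof -
    have "v \<noteq> []" using that(2) lw wne by auto
    then show ?thesis using alt_unique[OF that(1) aw] that lw ld by simp
  qed
  define lam where "lam = x w"
  define s where "s = x w'"
  define \<alpha> where "\<alpha> = cf p q d 1 - s / lam"
  have lam0: "lam \<noteq> 0" using xw by (simp add: lam_def)
  have N: "\<alpha> * \<alpha> - cf p q d 1 * \<alpha> * 1 + cf p q d 0 * 1 * 1 \<noteq> 0"
    using noroot[of d "- \<alpha>"] unfolding poly_P by (simp add: algebra_simps)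
  define k where "k = ws d \<alpha> 1"
  have kU: "k \<in> Units WW" using ws_unit(1)[OF N] by (simp add: k_def)
  have kb: "k \<in> basic_units p q"
    using kU by (cases d) (auto simp: basic_units_def W_sub_eq k_def)
  define xl where "xl = (\<lambda>v. x v - lam * dl w v)"
  have xlf: "finite (fsupp xl)"
    by (rule finite_subset[of _ "fsupp x \<union> {w}"]) (use xf in \<open>auto simp: xl_def fsupp_def dl_def\<close>)
  have xlb: "bnd (n - 1) xl"
    unfolding bnd_def
  proof (intro allI impI)
    fix v :: "bool list" assume v: "n - 1 < length v"
    show "xl v = 0"
    proof (cases "length v = n")
      case False
      then have "length v > n" using v by simp
      then show ?thesis using bn lw by (auto simp: xl_def bnd_def dl_def x_def)
    next
      case True
      show ?thesis
      proof (cases "v = w")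
        case True then show ?thesis by (simp add: xl_def lam_def dl_def)
      next
        case False
        have "x v = 0"
        proof (cases "alt v")
          case True
          have "last v \<noteq> d" using uniq[OF True \<open>length v = n\<close>] False by blast
          then show ?thesis using A[OF True \<open>length v = n\<close>] by simp
        next
          case False then show ?thesis using VsetD[OF xV] by blast
        qed
        then show ?thesis using False by (simp add: xl_def dl_def)
      qed
    qed
  qed
  have xsplit: "x = (\<lambda>v. xl v + lam * dl w v)" by (simp add: xl_def)
  have dlf: "finite (fsupp (\<lambda>v. lam * dl w v))"
    by (rule finite_subset[of _ "{w}"]) (auto simp: fsupp_def dl_def)
  have wsf_eq: "wsf d \<alpha> 1 = (\<lambda>v. \<alpha> * dl [] v + dl [d] v)" by (auto simp: wsf_def dl_def fun_eq_iff)
  have lact_dd: "lact p q d (dl [d]) = (\<lambda>v. - cf p q d 0 * dl [] v + - cf p q d 1 * dl [d] v)"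
    by (auto simp: lact_def dl_def fun_eq_iff split: list.splits)
  have lw_dd: "lword p q w (dl [d]) = (\<lambda>v. - cf p q d 0 * dl w' v + - cf p q d 1 * dl w v)"
  proof -
    have "lword p q w (dl [d]) = lword p q w' (lact p q d (dl [d]))" by (simp add: ww lword_append)
    also have "\<dots> = (\<lambda>v. - cf p q d 0 * lword p q w' (dl []) v + - cf p q d 1 * lword p q w' (dl [d]) v)"
      by (simp only: lact_dd lword_add lword_smult)
    also have "\<dots> = (\<lambda>v. - cf p q d 0 * dl w' v + - cf p q d 1 * dl w v)"
      using lword_dl[of w' "[]" p q] lword_dl[of w' "[d]" p q] aw' aw ww by simp
    finally show ?thesis .
  qed
  have dlb: "bnd 1 (dl [d] :: bool list \<Rightarrow> 'a)" by (auto simp: bnd_def dl_def)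
  have dlfin: "finite (fsupp (dl [d] :: bool list \<Rightarrow> 'a))" by (simp add: fsupp_def dl_def)
  have T: "act p q x (wsf d \<alpha> 1) = (\<lambda>v. \<alpha> * x v + act p q xl (dl [d]) v + lam * (- cf p q d 0 * dl w' v + - cf p q d 1 * dl w v))"
  proof -
    have "act p q x (wsf d \<alpha> 1) = (\<lambda>v. \<alpha> * act p q x (dl []) v + act p q x (dl [d]) v)"
      by (simp add: wsf_eq act_add_right act_smult_right)
    moreover have "act p q x (dl []) = x" using rho_V[OF xV] by (simp add: rho_def)
    moreover have "act p q x (dl [d]) = (\<lambda>v. act p q xl (dl [d]) v + lam * lword p q w (dl [d]) v)"
    proof -
      have "act p q x (dl [d]) = act p q (\<lambda>v. xl v + lam * dl w v) (dl [d])" using xsplit by simp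
      also have "\<dots> = (\<lambda>v. act p q xl (dl [d]) v + act p q (\<lambda>v. lam * dl w v) (dl [d]) v)"
        by (rule act_add[OF xlf dlf])
      finally show ?thesis by (simp add: act_smult act_dl)
    qed
    ultimately show ?thesis by (simp add: lw_dd add.assoc)
  qed
  have axl: "act p q xl (dl [d]) \<in> Vset" by (rule act_Vset[OF xlf Vset_dl]) simp
  have "bnd (n - 1) (act p q x (wsf d \<alpha> 1))"
    unfolding bnd_def
  proof (intro allI impI)
    fix v :: "bool list" assume v: "n - 1 < length v"
    have b1: "bnd (n - 1 + 1) (act p q xl (dl [d]))" by (rule act_top(1)[OF xlf xlb dlb])
    show "act p q x (wsf d \<alpha> 1) v = 0"
    proof (cases "length v = n")
      case False
      then have "length v > n" using v by simp
      then show ?thesis unfolding T using bn b1 lw n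
        by (auto simp: bnd_def dl_def x_def w'_def)
    next
      case True
      have "length w' = n - 1" by (simp add: w'_def lw)
      then have "v \<noteq> w'" using True n by auto
      then have dw': "dl w' v = (0::'a)" by (simp add: dl_def)
      show ?thesis
      proof (cases "alt v")
        case False
        then have "x v = 0" "act p q xl (dl [d]) v = 0" "dl w v = (0::'a)"
          using VsetD[OF xV] VsetD[OF axl] aw by (auto simp: dl_def)
        then show ?thesis unfolding T using dw' by simp
      next
        case av: True
        have top: "act p q xl (dl [d]) v = xl (butlast v) * dl [d] [last v]"
          using act_top(2)[OF xlf xlb dlb, of v] av True n take_drop_last[OF True n] by simp
        show ?thesis
        proof (cases "v = w")
          case True
          have bv: "butlast v = w'" using True by (simp add: w'_def)
          have "w' \<noteq> w" using ww by simp
          then have "xl (butlast v) = s" using bv by (simp add: xl_def s_def dl_def)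
          moreover have "dl [d] [last v] = (1::'a)" using True ld by (simp add: dl_def)
          ultimately have e: "act p q xl (dl [d]) v = s" using top by simp
          have xv: "x v = lam" using True by (simp add: lam_def)
          have dv: "dl w v = (1::'a)" using True by (simp add: dl_def)
          have "\<alpha> * lam + s + lam * (- cf p q d 0 * 0 + - cf p q d 1 * 1) = 0"
            using lam0 by (simp add: \<alpha>_def field_simps)
          then show ?thesis unfolding T using dw' e xv dv by simp
        next
          case False
          have "last v \<noteq> d" using uniq[OF av True] False by blast
          then have "x v = 0" "dl [d] [last v] = (0::'a)" using A[OF av True] by (auto simp: dl_def)
          then show ?thesis unfolding T using dw' top False by (simp add: dl_def)
        qed
      qed
    qed
  qed
  then have "bnd (n - 1) (rep (U \<otimes>\<^bsub>WW\<^esub> k))"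
    by (simp add: rep_mult[OF Uc] k_def rep_ws x_def)
  then show ?thesis using kb by blast
qed

end

context wpq begin

lemma W_monoid: "monoid WW" by (rule ring.is_monoid[OF W_ring])

lemma basic_sub: "basic_units p q \<subseteq> Units WW"
  by (auto simp: basic_units_def)

lemma gen_sub: "generate (units_of WW) (basic_units p q) \<subseteq> Units WW"
proof -
  have "generate (units_of WW) (basic_units p q) \<subseteq> carrier (units_of WW)"
    by (rule group.generate_incl[OF monoid.units_group[OF W_monoid]])
       (simp add: units_of_carrier basic_sub)
  then show ?thesis by (simp add: units_of_carrier)
qed

lemma bnd0_ws: assumes "bnd 0 f" shows "f = wsf c (f []) 0"
proof
  fix v show "f v = wsf c (f []) 0 v"
    using assms by (cases v) (auto simp: bnd_def wsf_def)
qed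

lemma gen_all:
  assumes noroot: "\<And>c r. poly (if c then p else q) r \<noteq> 0"
  shows "generate (units_of WW) (basic_units p q) = Units WW"
proof
  show "generate (units_of WW) (basic_units p q) \<subseteq> Units WW" by (rule gen_sub)
  have main: "\<forall>U. U \<in> Units WW \<longrightarrow> bnd n (rep U) \<longrightarrow> U \<in> generate (units_of WW) (basic_units p q)" for n
  proof (induction n)
    case 0
    show ?case
    proof (intro allI impI)
      fix U assume U: "U \<in> Units WW" and b: "bnd 0 (rep U)"
      have Uc: "U \<in> carrier WW" using U by (simp add: Units_W)
      have "U = ws True (rep U []) 0"
        using cl_rep[OF Uc] bnd0_ws[OF b, of True] by (simp add: ws_def)
      then have "U \<in> basic_units p q" using U by (auto simp: basic_units_def W_sub_eq)
      then show "U \<in> generate (units_of WW) (basic_units p q)" by (rule generate.incl)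
    qed
  next
    case (Suc n)
    show ?case
    proof (intro allI impI)
      fix U assume U: "U \<in> Units WW" and b: "bnd (Suc n) (rep U)"
      show "U \<in> generate (units_of WW) (basic_units p q)"
      proof (cases "bnd n (rep U)")
        case True then show ?thesis using Suc.IH U by blast
      next
        case False
        then obtain k where kb: "k \<in> basic_units p q" and bk: "bnd n (rep (U \<otimes>\<^bsub>WW\<^esub> k))"
          using descent[OF noroot U _ b] by auto
        have kU: "k \<in> Units WW" using kb basic_sub by blast
        have UkU: "U \<otimes>\<^bsub>WW\<^esub> k \<in> Units WW" using monoid.Units_m_closed[OF W_monoid U kU] .
        have g1: "U \<otimes>\<^bsub>WW\<^esub> k \<in> generate (units_of WW) (basic_units p q)" using Suc.IH UkU bk by blast
        have g2: "inv\<^bsub>units_of WW\<^esub> k \<in> generate (units_of WW) (basic_units p q)" by (rule generate.inv[OF kb])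
        have "(U \<otimes>\<^bsub>WW\<^esub> k) \<otimes>\<^bsub>units_of WW\<^esub> inv\<^bsub>units_of WW\<^esub> k \<in> generate (units_of WW) (basic_units p q)"
          by (rule generate.eng[OF g1 g2])
        moreover have "(U \<otimes>\<^bsub>WW\<^esub> k) \<otimes>\<^bsub>units_of WW\<^esub> inv\<^bsub>units_of WW\<^esub> k = U"
        proof -
          have Uc: "U \<in> carrier WW" and kc: "k \<in> carrier WW" using U kU by (auto simp: Units_W)
          have ik: "inv\<^bsub>units_of WW\<^esub> k = inv\<^bsub>WW\<^esub> k" by (rule monoid.units_of_inv[OF W_monoid kU])
          have ic: "inv\<^bsub>WW\<^esub> k \<in> carrier WW" using monoid.Units_inv_closed[OF W_monoid kU] .
          show ?thesis unfolding ik units_of_mult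
            using monoid.m_assoc[OF W_monoid Uc kc ic] monoid.Units_r_inv[OF W_monoid kU] monoid.r_one[OF W_monoid Uc]
            by simp
        qed
        ultimately show ?thesis by simp
      qed
    qed
  qed
  show "Units WW \<subseteq> generate (units_of WW) (basic_units p q)"
  proof
    fix U assume U: "U \<in> Units WW"
    then have "U \<in> carrier WW" by (simp add: Units_W)
    then obtain n where "bnd n (rep U)" using bnd_exists rep_Vset Vset_fin by blast
    then show "U \<in> generate (units_of WW) (basic_units p q)" using main U by blast
  qed
qed

end

context wpq begin

definition prodW :: "(bool \<times> (bool list \<Rightarrow> 'a) set) list \<Rightarrow> (bool list \<Rightarrow> 'a) set" where
  "prodW fs = foldl (\<lambda>acc f. acc \<otimes>\<^bsub>WW\<^esub> snd f) \<one>\<^bsub>WW\<^esub> fs"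

lemma prodW_Nil[simp]: "prodW [] = \<one>\<^bsub>WW\<^esub>" by (simp add: prodW_def)
lemma prodW_snoc: "prodW (fs @ [f]) = prodW fs \<otimes>\<^bsub>WW\<^esub> snd f" by (simp add: prodW_def)

definition good :: "(bool \<times> (bool list \<Rightarrow> 'a) set) list \<Rightarrow> bool" where
  "good fs \<longleftrightarrow> alt (map fst fs) \<and> (\<forall>f\<in>set fs. snd f \<in> Units WW \<and> (\<exists>\<alpha> \<beta>. \<beta> \<noteq> 0 \<and> snd f = ws (fst f) \<alpha> \<beta>))"

lemma good_snoc: "good (fs @ [f]) \<longleftrightarrow> good fs \<and> (fs = [] \<or> fst (last fs) \<noteq> fst f) \<and>
   snd f \<in> Units WW \<and> (\<exists>\<alpha> \<beta>. \<beta> \<noteq> 0 \<and> snd f = ws (fst f) \<alpha> \<beta>)"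
  by (auto simp: good_def alt_snoc last_map)

lemma prodW_units: "good fs \<Longrightarrow> prodW fs \<in> Units WW"
proof (induction fs rule: rev_induct)
  case Nil then show ?case by (simp add: monoid.Units_one_closed[OF W_monoid])
next
  case (snoc f fs)
  then show ?case by (simp add: good_snoc prodW_snoc monoid.Units_m_closed[OF W_monoid])
qed

lemma prodW_carrier: "good fs \<Longrightarrow> prodW fs \<in> carrier WW"
  using prodW_units by (simp add: Units_W)

lemma prodW_top: "good fs \<Longrightarrow> bnd (length fs) (rep (prodW fs)) \<and>
   (\<exists>\<gamma>. \<gamma> \<noteq> 0 \<and> (\<forall>w. alt w \<longrightarrow> length w = length fs \<longrightarrow> rep (prodW fs) w = (if w = map fst fs then \<gamma> else 0)))"
proof (induction fs rule: rev_induct)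
  case Nil
  have "bnd 0 (dl [] :: bool list \<Rightarrow> 'a)" by (auto simp: bnd_def dl_def)
  moreover have "\<forall>w. alt w \<longrightarrow> length w = 0 \<longrightarrow> dl [] w = (if w = [] then (1::'a) else 0)" by (simp add: dl_def)
  ultimately show ?case by (simp add: rep_one)
next
  case (snoc f fs)
  obtain c k where f: "f = (c, k)" by fastforce
  have g: "good fs" and kU: "k \<in> Units WW" and c: "fs = [] \<or> fst (last fs) \<noteq> c"
    using snoc.prems f by (auto simp: good_snoc)
  obtain \<alpha> \<beta> where b0: "\<beta> \<noteq> 0" and k: "k = ws c \<alpha> \<beta>" using snoc.prems f by (auto simp: good_snoc)
  obtain \<gamma> where g0: "\<gamma> \<noteq> 0" and top: "\<And>w. alt w \<Longrightarrow> length w = length fs \<Longrightarrow> rep (prodW fs) w = (if w = map fst fs then \<gamma> else 0)"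
    and bP: "bnd (length fs) (rep (prodW fs))" using snoc.IH[OF g] by blast
  have Pc: "prodW fs \<in> carrier WW" by (rule prodW_carrier[OF g])
  have Pf: "finite (fsupp (rep (prodW fs)))" using rep_Vset[OF Pc] Vset_fin by blast
  have r: "rep (prodW (fs @ [f])) = act p q (rep (prodW fs)) (wsf c \<alpha> \<beta>)"
    by (simp add: prodW_snoc f k rep_mult[OF Pc] rep_ws)
  have "bnd (length fs + 1) (rep (prodW (fs @ [f])))"
    unfolding r by (rule act_top(1)[OF Pf bP wsf_bnd])
  moreover have "rep (prodW (fs @ [f])) w = (if w = map fst (fs @ [f]) then \<gamma> * \<beta> else 0)"
    if w: "alt w" "length w = length (fs @ [f])" for w
  proof -
    have l: "length w = length fs + 1" using w by simp
    have td: "take (length fs) w = butlast w" "drop (length fs) w = [last w]"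
      using take_drop_last[OF l] by auto
    have wne: "w \<noteq> []" using l by auto
    have ab: "alt (butlast w)" using w(1) wne by (metis alt_append append_butlast_last_id)
    have lb: "length (butlast w) = length fs" using l by simp
    have "rep (prodW (fs @ [f])) w = rep (prodW fs) (butlast w) * wsf c \<alpha> \<beta> [last w]"
      unfolding r using act_top(2)[OF Pf bP wsf_bnd, of w] w l td by simp
    also have "\<dots> = (if butlast w = map fst fs then \<gamma> else 0) * (if last w = c then \<beta> else 0)"
      by (simp add: top[OF ab lb] wsf_single)
    also have "\<dots> = (if w = map fst (fs @ [f]) then \<gamma> * \<beta> else 0)"
    proof -
      have "(butlast w = map fst fs \<and> last w = c) \<longleftrightarrow> w = map fst fs @ [c]"
      proof
        assume "butlast w = map fst fs \<and> last w = c"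
        then show "w = map fst fs @ [c]" using append_butlast_last_id[OF wne] by simp
      qed simp
      then show ?thesis using f by auto
    qed
    finally show ?thesis .
  qed
  ultimately show ?case using g0 b0 by (intro conjI exI[where x="\<gamma> * \<beta>"]) auto
qed

definition Rep :: "(bool list \<Rightarrow> 'a) set \<Rightarrow> bool" where
  "Rep g \<longleftrightarrow> (\<exists>lam fs. lam \<noteq> 0 \<and> good fs \<and> g = ws True lam 0 \<otimes>\<^bsub>WW\<^esub> prodW fs)"

lemma zero_not_unit: "\<zero>\<^bsub>WW\<^esub> \<notin> Units WW"
proof
  assume "\<zero>\<^bsub>WW\<^esub> \<in> Units WW"
  then obtain V where "V \<in> carrier WW" "\<zero>\<^bsub>WW\<^esub> \<otimes>\<^bsub>WW\<^esub> V = \<one>\<^bsub>WW\<^esub>" by (auto simp: Units_W)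
  then show False using ring.ring_simprules(24)[OF W_ring] one_neq_zero by auto
qed

lemma ws_zero_iff: "ws c \<alpha> \<beta> = \<zero>\<^bsub>WW\<^esub> \<longleftrightarrow> \<alpha> = 0 \<and> \<beta> = 0"
proof
  assume "ws c \<alpha> \<beta> = \<zero>\<^bsub>WW\<^esub>"
  then have "wsf c \<alpha> \<beta> = (\<lambda>v. 0)" using rep_ws rep_zero by metis
  then have "wsf c \<alpha> \<beta> [] = 0" "wsf c \<alpha> \<beta> [c] = 0" by auto
  then show "\<alpha> = 0 \<and> \<beta> = 0" by (simp add: wsf_def)
qed (simp add: ws_zero)

lemma ws_unit_N:
  assumes kU: "ws c \<alpha> \<beta> \<in> Units WW"
  shows "\<alpha> * \<alpha> - cf p q c 1 * \<alpha> * \<beta> + cf p q c 0 * \<beta> * \<beta> \<noteq> 0"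
proof
  assume N: "\<alpha> * \<alpha> - cf p q c 1 * \<alpha> * \<beta> + cf p q c 0 * \<beta> * \<beta> = 0"
  interpret R: ring WW by (rule W_ring)
  let ?kb = "ws c (\<alpha> - cf p q c 1 * \<beta>) (- \<beta>)"
  have "ws c \<alpha> \<beta> \<otimes>\<^bsub>WW\<^esub> ?kb = ws c 0 0"
    unfolding ws_mult using N by (intro arg_cong2[where f="ws c"]) (simp_all add: algebra_simps)
  then have e: "ws c \<alpha> \<beta> \<otimes>\<^bsub>WW\<^esub> ?kb = \<zero>\<^bsub>WW\<^esub>" by (simp add: ws_zero)
  have ic: "inv\<^bsub>WW\<^esub> (ws c \<alpha> \<beta>) \<in> carrier WW" using kU by (rule R.Units_inv_closed)
  have "inv\<^bsub>WW\<^esub> (ws c \<alpha> \<beta>) \<otimes>\<^bsub>WW\<^esub> (ws c \<alpha> \<beta> \<otimes>\<^bsub>WW\<^esub> ?kb)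
      = (inv\<^bsub>WW\<^esub> (ws c \<alpha> \<beta>) \<otimes>\<^bsub>WW\<^esub> ws c \<alpha> \<beta>) \<otimes>\<^bsub>WW\<^esub> ?kb"
    by (rule R.m_assoc[symmetric, OF ic ws_carrier ws_carrier])
  also have "\<dots> = ?kb" by (simp only: R.Units_l_inv[OF kU] R.l_one[OF ws_carrier])
  finally have "?kb = inv\<^bsub>WW\<^esub> (ws c \<alpha> \<beta>) \<otimes>\<^bsub>WW\<^esub> (ws c \<alpha> \<beta> \<otimes>\<^bsub>WW\<^esub> ?kb)" by simp
  also have "\<dots> = \<zero>\<^bsub>WW\<^esub>" by (simp only: e R.r_null[OF ic])
  finally have "?kb = \<zero>\<^bsub>WW\<^esub>" .
  then have "\<beta> = 0 \<and> \<alpha> - cf p q c 1 * \<beta> = 0" by (simp only: ws_zero_iff) simp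
  then have "ws c \<alpha> \<beta> = \<zero>\<^bsub>WW\<^esub>" by (simp add: ws_zero)
  then show False using kU zero_not_unit by simp
qed

lemma basicE:
  assumes "k \<in> basic_units p q"
  obtains c \<alpha> \<beta> where "k = ws c \<alpha> \<beta>" "k \<in> Units WW"
  using assms unfolding basic_units_def W_sub_eq by blast

lemma basic_inv:
  assumes kb: "k \<in> basic_units p q"
  shows "inv\<^bsub>WW\<^esub> k \<in> basic_units p q"
proof -
  obtain c \<alpha> \<beta> where k: "k = ws c \<alpha> \<beta>" and kU: "k \<in> Units WW" using kb by (rule basicE)
  have N: "\<alpha> * \<alpha> - cf p q c 1 * \<alpha> * \<beta> + cf p q c 0 * \<beta> * \<beta> \<noteq> 0" using ws_unit_N kU k by simp
  have "inv\<^bsub>WW\<^esub> k \<in> Units WW" using kU by (simp add: monoid.Units_inv_Units[OF W_monoid])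
  moreover have "inv\<^bsub>WW\<^esub> k \<in> W_sub p q c" unfolding k ws_unit(2)[OF N] W_sub_eq by blast
  ultimately show ?thesis by (cases c) (auto simp: basic_units_def)
qed

lemma sc_mult: "ws c \<alpha> 0 \<otimes>\<^bsub>WW\<^esub> ws c' \<beta> 0 = ws True (\<alpha> * \<beta>) 0"
proof -
  have "ws c \<alpha> 0 \<otimes>\<^bsub>WW\<^esub> ws c' \<beta> 0 = ws True \<alpha> 0 \<otimes>\<^bsub>WW\<^esub> ws True \<beta> 0"
    using ws_sc[of c \<alpha> True] ws_sc[of c' \<beta> True] by simp
  then show ?thesis by (simp add: ws_mult)
qed

lemma Rep_carrier: "Rep g \<Longrightarrow> g \<in> carrier WW"
  unfolding Rep_def using prodW_carrier ring.ring_simprules(5)[OF W_ring] ws_carrier by blast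

end

context wpq begin
lemma Rep_step:
  assumes Rg: "Rep g" and kb: "k \<in> basic_units p q"
  shows "Rep (g \<otimes>\<^bsub>WW\<^esub> k)"
proof -
  interpret R: ring WW by (rule W_ring)
  obtain lam fs where l0: "lam \<noteq> 0" and g: "good fs" and geq: "g = ws True lam 0 \<otimes>\<^bsub>WW\<^esub> prodW fs"
    using Rg by (auto simp: Rep_def)
  obtain c \<alpha> \<beta> where k: "k = ws c \<alpha> \<beta>" and kU: "k \<in> Units WW" using kb by (rule basicE)
  have Pc: "prodW fs \<in> carrier WW" by (rule prodW_carrier[OF g])
  have kc: "k \<in> carrier WW" using kU by (simp add: Units_W)
  show ?thesis
  proof (cases "\<beta> = 0")
    case True
    have a0: "\<alpha> \<noteq> 0" using kU k True zero_not_unit ws_zero by auto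
    have "g \<otimes>\<^bsub>WW\<^esub> k = (ws True lam 0 \<otimes>\<^bsub>WW\<^esub> prodW fs) \<otimes>\<^bsub>WW\<^esub> ws c \<alpha> 0"
      by (simp add: geq k True)
    also have "\<dots> = ws True lam 0 \<otimes>\<^bsub>WW\<^esub> (prodW fs \<otimes>\<^bsub>WW\<^esub> ws c \<alpha> 0)"
      by (rule R.m_assoc) (simp_all add: Pc)
    also have "\<dots> = ws True lam 0 \<otimes>\<^bsub>WW\<^esub> (ws c \<alpha> 0 \<otimes>\<^bsub>WW\<^esub> prodW fs)"
      by (simp only: sc_central[OF Pc, of c \<alpha>])
    also have "\<dots> = (ws True lam 0 \<otimes>\<^bsub>WW\<^esub> ws c \<alpha> 0) \<otimes>\<^bsub>WW\<^esub> prodW fs"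
      by (rule R.m_assoc[symmetric]) (simp_all add: Pc)
    also have "\<dots> = ws True (lam * \<alpha>) 0 \<otimes>\<^bsub>WW\<^esub> prodW fs" by (simp only: sc_mult)
    finally show ?thesis unfolding Rep_def using l0 a0 g by (intro exI[where x="lam * \<alpha>"] exI[where x=fs]) simp
  next
    case False
    show ?thesis
    proof (cases "fs = [] \<or> fst (last fs) \<noteq> c")
      case True
      have "good (fs @ [(c, k)])" using g True kU k False by (auto simp: good_snoc)
      moreover have "g \<otimes>\<^bsub>WW\<^esub> k = ws True lam 0 \<otimes>\<^bsub>WW\<^esub> prodW (fs @ [(c, k)])"
        unfolding geq prodW_snoc snd_conv by (rule R.m_assoc) (simp_all add: Pc kc)
      ultimately show ?thesis unfolding Rep_def using l0 by (intro exI[where x="lam"] exI[where x="fs @ [(c, k)]"]) simp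
    next
      case False
      then have fne: "fs \<noteq> []" and lc: "fst (last fs) = c" by auto
      obtain fs0 f where fsf: "fs = fs0 @ [f]" using fne rev_exhaust by blast
      define k' where "k' = snd f"
      have fs: "fs = fs0 @ [(c, k')]" using fsf lc by (cases f) (simp add: k'_def)
      have g0: "good fs0" and k'U: "k' \<in> Units WW" and c0: "fs0 = [] \<or> fst (last fs0) \<noteq> c"
        using g fs by (auto simp: good_snoc)
      obtain \<alpha>' \<beta>' where k': "k' = ws c \<alpha>' \<beta>'" using g fs by (auto simp: good_snoc)
      have P0c: "prodW fs0 \<in> carrier WW" by (rule prodW_carrier[OF g0])
      have k'c: "k' \<in> carrier WW" using k'U by (simp add: Units_W)
      define k'' where "k'' = k' \<otimes>\<^bsub>WW\<^esub> k"
      have k''U: "k'' \<in> Units WW" using k'U kU by (simp add: k''_def R.Units_m_closed)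
      obtain \<alpha>'' \<beta>'' where k'': "k'' = ws c \<alpha>'' \<beta>''" by (simp add: k''_def k' k ws_mult)
      have geq2: "g \<otimes>\<^bsub>WW\<^esub> k = ws True lam 0 \<otimes>\<^bsub>WW\<^esub> (prodW fs0 \<otimes>\<^bsub>WW\<^esub> k'')"
      proof -
        have "g \<otimes>\<^bsub>WW\<^esub> k = ((ws True lam 0 \<otimes>\<^bsub>WW\<^esub> prodW fs0) \<otimes>\<^bsub>WW\<^esub> k') \<otimes>\<^bsub>WW\<^esub> k"
          by (simp only: geq fs prodW_snoc snd_conv R.m_assoc[OF ws_carrier P0c k'c])
        also have "\<dots> = (ws True lam 0 \<otimes>\<^bsub>WW\<^esub> prodW fs0) \<otimes>\<^bsub>WW\<^esub> (k' \<otimes>\<^bsub>WW\<^esub> k)"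
          by (rule R.m_assoc) (simp_all add: P0c k'c kc)
        also have "\<dots> = ws True lam 0 \<otimes>\<^bsub>WW\<^esub> (prodW fs0 \<otimes>\<^bsub>WW\<^esub> (k' \<otimes>\<^bsub>WW\<^esub> k))"
          by (rule R.m_assoc) (simp_all add: P0c k'c kc)
        finally show ?thesis by (simp add: k''_def)
      qed
      show ?thesis
      proof (cases "\<beta>'' = 0")
        case False
        have "good (fs0 @ [(c, k'')])" using g0 c0 k''U k'' False by (auto simp: good_snoc)
        then show ?thesis unfolding Rep_def using geq2 l0 by (intro exI[where x="lam"] exI[where x="fs0 @ [(c, k'')]"]) (simp add: prodW_snoc)
      next
        case True
        have a0: "\<alpha>'' \<noteq> 0" using k''U k'' True zero_not_unit ws_zero by auto
        have "g \<otimes>\<^bsub>WW\<^esub> k = ws True lam 0 \<otimes>\<^bsub>WW\<^esub> (ws c \<alpha>'' 0 \<otimes>\<^bsub>WW\<^esub> prodW fs0)"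
          unfolding geq2 k'' True by (simp only: sc_central[OF P0c, of c \<alpha>''])
        also have "\<dots> = (ws True lam 0 \<otimes>\<^bsub>WW\<^esub> ws c \<alpha>'' 0) \<otimes>\<^bsub>WW\<^esub> prodW fs0"
          by (rule R.m_assoc[symmetric]) (simp_all add: P0c)
        also have "\<dots> = ws True (lam * \<alpha>'') 0 \<otimes>\<^bsub>WW\<^esub> prodW fs0" by (simp only: sc_mult)
        finally show ?thesis unfolding Rep_def using l0 a0 g0 by (intro exI[where x="lam * \<alpha>''"] exI[where x=fs0]) simp
      qed
    qed
  qed
qed

lemma Rep_gen:
  assumes h: "h \<in> generate (units_of WW) (basic_units p q)"
  shows "\<forall>g. Rep g \<longrightarrow> Rep (g \<otimes>\<^bsub>WW\<^esub> h)"
  using h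
proof (induction h rule: generate.induct)
  case one
  then show ?case using Rep_carrier by (simp add: units_of_one monoid.r_one[OF W_monoid])
next
  case (incl h)
  then show ?case using Rep_step by blast
next
  case (inv h)
  have "inv\<^bsub>units_of WW\<^esub> h = inv\<^bsub>WW\<^esub> h"
    using inv basic_sub by (simp add: monoid.units_of_inv[OF W_monoid] subset_iff)
  then show ?case using Rep_step basic_inv[OF inv] by simp
next
  case (eng h1 h2)
  have h1c: "h1 \<in> carrier WW" and h2c: "h2 \<in> carrier WW"
    using eng.hyps gen_sub by (auto simp: Units_W subset_iff)
  show ?case
  proof (intro allI impI)
    fix g assume "Rep g"
    then have "Rep ((g \<otimes>\<^bsub>WW\<^esub> h1) \<otimes>\<^bsub>WW\<^esub> h2)" using eng.IH by blast
    then show "Rep (g \<otimes>\<^bsub>WW\<^esub> (h1 \<otimes>\<^bsub>units_of WW\<^esub> h2))"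
      using Rep_carrier[OF \<open>Rep g\<close>] h1c h2c by (simp add: units_of_mult monoid.m_assoc[OF W_monoid])
  qed
qed

lemma Rep_all: "h \<in> generate (units_of WW) (basic_units p q) \<Longrightarrow> Rep h"
proof -
  assume h: "h \<in> generate (units_of WW) (basic_units p q)"
  have R1: "Rep \<one>\<^bsub>WW\<^esub>"
    unfolding Rep_def
    by (rule exI[of _ 1], rule exI[of _ "[]"]) (simp add: good_def ws_one monoid.l_one[OF W_monoid] monoid.one_closed[OF W_monoid])
  have hc: "h \<in> carrier WW" using h gen_sub by (auto simp: Units_W)
  have "Rep (\<one>\<^bsub>WW\<^esub> \<otimes>\<^bsub>WW\<^esub> h)" using Rep_gen[OF h] R1 by blast
  then show ?thesis using hc by (simp add: monoid.l_one[OF W_monoid])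
qed

end

context wpq begin

lemma not_gen:
  assumes root: "poly (if d then p else q) r = 0"
  shows "generate (units_of WW) (basic_units p q) \<noteq> Units WW"
proof
  assume geq: "generate (units_of WW) (basic_units p q) = Units WW"
  interpret R: ring WW by (rule W_ring)
  define e where "e = (\<not> d)"
  define s where "s = - cf p q d 1 - r"
  have c1: "cf p q d 1 = - r - s" by (simp add: s_def)
  have c1': "cf p q d (Suc 0) = - r - s" by (simp add: s_def)
  have h: "cf p q d 0 + cf p q d 1 * r + r * r = 0" using root by (simp add: poly_P)
  have c0: "cf p q d 0 = r * s"
  proof -
    have "cf p q d 0 = (cf p q d 0 + cf p q d 1 * r + r * r) - cf p q d 1 * r - r * r" by (simp add: algebra_simps)
    also have "\<dots> = r * s" using h by (simp add: s_def algebra_simps)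
    finally show ?thesis .
  qed
  define A where "A = ws d (- r) 1"
  define B where "B = ws e 0 1"
  define C where "C = ws d (- s) 1"
  have Ac: "A \<in> carrier WW" and Bc: "B \<in> carrier WW" and Cc: "C \<in> carrier WW"
    by (simp_all add: A_def B_def C_def)
  have CA: "C \<otimes>\<^bsub>WW\<^esub> A = \<zero>\<^bsub>WW\<^esub>"
    unfolding A_def C_def ws_mult ws_zero[of d, symmetric] by (simp add: c0 c1 c1' algebra_simps)
  define z where "z = (A \<otimes>\<^bsub>WW\<^esub> B) \<otimes>\<^bsub>WW\<^esub> C"
  have zc: "z \<in> carrier WW" by (simp add: z_def Ac Bc Cc)
  have zz: "z \<otimes>\<^bsub>WW\<^esub> z = \<zero>\<^bsub>WW\<^esub>"
  proof -
    have "z \<otimes>\<^bsub>WW\<^esub> z = (A \<otimes>\<^bsub>WW\<^esub> B) \<otimes>\<^bsub>WW\<^esub> ((C \<otimes>\<^bsub>WW\<^esub> A) \<otimes>\<^bsub>WW\<^esub> (B \<otimes>\<^bsub>WW\<^esub> C))"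
      by (simp add: z_def R.m_assoc Ac Bc Cc)
    also have "\<dots> = \<zero>\<^bsub>WW\<^esub>" by (simp add: CA Ac Bc Cc)
    finally show ?thesis .
  qed
  define Xu where "Xu = \<one>\<^bsub>WW\<^esub> \<oplus>\<^bsub>WW\<^esub> z"
  have Xc: "Xu \<in> carrier WW" by (simp add: Xu_def zc)
  have nzc: "\<ominus>\<^bsub>WW\<^esub> z \<in> carrier WW" using zc by simp
  have Xu1: "Xu \<otimes>\<^bsub>WW\<^esub> (\<one>\<^bsub>WW\<^esub> \<oplus>\<^bsub>WW\<^esub> \<ominus>\<^bsub>WW\<^esub> z) = \<one>\<^bsub>WW\<^esub>"
  proof -
    let ?W = "\<one>\<^bsub>WW\<^esub> \<oplus>\<^bsub>WW\<^esub> \<ominus>\<^bsub>WW\<^esub> z"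
    have Wc: "?W \<in> carrier WW" using nzc by simp
    have zW: "z \<otimes>\<^bsub>WW\<^esub> ?W = z"
    proof -
      have "z \<otimes>\<^bsub>WW\<^esub> ?W = z \<otimes>\<^bsub>WW\<^esub> \<one>\<^bsub>WW\<^esub> \<oplus>\<^bsub>WW\<^esub> z \<otimes>\<^bsub>WW\<^esub> \<ominus>\<^bsub>WW\<^esub> z"
        by (rule R.r_distr[OF R.one_closed nzc zc])
      also have "\<dots> = z \<oplus>\<^bsub>WW\<^esub> \<ominus>\<^bsub>WW\<^esub> (z \<otimes>\<^bsub>WW\<^esub> z)"
        by (simp only: R.r_one[OF zc] R.r_minus[OF zc zc])
      also have "\<dots> = z" by (simp add: zz zc)
      finally show ?thesis .
    qed
    have "Xu \<otimes>\<^bsub>WW\<^esub> ?W = \<one>\<^bsub>WW\<^esub> \<otimes>\<^bsub>WW\<^esub> ?W \<oplus>\<^bsub>WW\<^esub> z \<otimes>\<^bsub>WW\<^esub> ?W"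
      unfolding Xu_def by (rule R.l_distr[OF R.one_closed zc Wc])
    also have "\<dots> = ?W \<oplus>\<^bsub>WW\<^esub> z" by (simp only: R.l_one[OF Wc] zW)
    also have "\<dots> = \<one>\<^bsub>WW\<^esub>" by (simp add: R.a_assoc zc R.l_neg)
    finally show ?thesis .
  qed
  have Xu2: "(\<one>\<^bsub>WW\<^esub> \<oplus>\<^bsub>WW\<^esub> \<ominus>\<^bsub>WW\<^esub> z) \<otimes>\<^bsub>WW\<^esub> Xu = \<one>\<^bsub>WW\<^esub>"
  proof -
    have nzX: "\<ominus>\<^bsub>WW\<^esub> z \<otimes>\<^bsub>WW\<^esub> Xu = \<ominus>\<^bsub>WW\<^esub> z"
    proof -
      have "\<ominus>\<^bsub>WW\<^esub> z \<otimes>\<^bsub>WW\<^esub> Xu = \<ominus>\<^bsub>WW\<^esub> z \<otimes>\<^bsub>WW\<^esub> \<one>\<^bsub>WW\<^esub> \<oplus>\<^bsub>WW\<^esub> \<ominus>\<^bsub>WW\<^esub> z \<otimes>\<^bsub>WW\<^esub> z"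
        unfolding Xu_def by (rule R.r_distr[OF R.one_closed zc nzc])
      also have "\<dots> = \<ominus>\<^bsub>WW\<^esub> z \<oplus>\<^bsub>WW\<^esub> \<ominus>\<^bsub>WW\<^esub> (z \<otimes>\<^bsub>WW\<^esub> z)"
        by (simp only: R.r_one[OF nzc] R.l_minus[OF zc zc])
      also have "\<dots> = \<ominus>\<^bsub>WW\<^esub> z" by (simp add: zz zc)
      finally show ?thesis .
    qed
    have "(\<one>\<^bsub>WW\<^esub> \<oplus>\<^bsub>WW\<^esub> \<ominus>\<^bsub>WW\<^esub> z) \<otimes>\<^bsub>WW\<^esub> Xu = \<one>\<^bsub>WW\<^esub> \<otimes>\<^bsub>WW\<^esub> Xu \<oplus>\<^bsub>WW\<^esub> \<ominus>\<^bsub>WW\<^esub> z \<otimes>\<^bsub>WW\<^esub> Xu"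
      by (rule R.l_distr[OF R.one_closed nzc Xc])
    also have "\<dots> = Xu \<oplus>\<^bsub>WW\<^esub> \<ominus>\<^bsub>WW\<^esub> z" by (simp only: R.l_one[OF Xc] nzX)
    also have "\<dots> = \<one>\<^bsub>WW\<^esub>" by (simp add: Xu_def R.a_assoc zc R.r_neg)
    finally show ?thesis .
  qed
  have XU: "Xu \<in> Units WW" using Xu1 Xu2 Xc nzc by (auto simp: Units_W)
  have de: "d \<noteq> e" by (simp add: e_def)
  have AB: "rep (A \<otimes>\<^bsub>WW\<^esub> B) = act p q (wsf d (- r) 1) (wsf e 0 1)"
    by (simp add: rep_mult A_def B_def rep_ws)
  have bAB0: "bnd (1 + 1) (rep (A \<otimes>\<^bsub>WW\<^esub> B))" unfolding AB by (rule act_top(1)[OF wsf_fin wsf_bnd wsf_bnd])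
  have bAB: "bnd 2 (rep (A \<otimes>\<^bsub>WW\<^esub> B))" using bAB0 by (simp only: one_add_one)
  have vAB: "rep (A \<otimes>\<^bsub>WW\<^esub> B) [d, e] = 1"
    unfolding AB using act_top(2)[OF wsf_fin wsf_bnd wsf_bnd, of "[d, e]" p q d "- r" 1 e 0 1] de
    by (simp add: wsf_single)
  have ABc: "A \<otimes>\<^bsub>WW\<^esub> B \<in> carrier WW" by (simp add: Ac Bc)
  have ABf: "finite (fsupp (rep (A \<otimes>\<^bsub>WW\<^esub> B)))" using rep_Vset[OF ABc] Vset_fin by blast
  have Z: "rep z = act p q (rep (A \<otimes>\<^bsub>WW\<^esub> B)) (wsf d (- s) 1)"
  proof -
    have "rep z = act p q (rep (A \<otimes>\<^bsub>WW\<^esub> B)) (rep C)" unfolding z_def by (rule rep_mult[OF ABc Cc])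
    then show ?thesis by (simp add: C_def rep_ws)
  qed
  have bz0: "bnd (2 + 1) (rep z)" unfolding Z by (rule act_top(1)[OF ABf bAB wsf_bnd])
  have bz: "bnd 3 (rep z)" using bz0 by (simp only: numeral_plus_one semiring_norm)
  have vz: "rep z [d, e, d] = 1"
  proof -
    have b2: "bnd 2 (rep (A \<otimes>\<^bsub>WW\<^esub> B))" using bAB .
    have "rep z [d, e, d] = rep (A \<otimes>\<^bsub>WW\<^esub> B) (take 2 [d, e, d]) * wsf d (- s) 1 (drop 2 [d, e, d])"
      unfolding Z by (rule act_top(2)[OF ABf b2 wsf_bnd]) (use de in simp_all)
    then show ?thesis using vAB by (simp add: wsf_single numeral_2_eq_2)
  qed
  have rX: "rep Xu = (\<lambda>v. dl [] v + rep z v)" by (simp add: Xu_def rep_add zc rep_one)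
  have vX: "rep Xu [d, e, d] = 1" using vz by (simp add: rX dl_def)
  have bX: "bnd 3 (rep Xu)" using bz by (auto simp: rX bnd_def dl_def)
  (* Xu is generated, hence of reduced form *)
  have "Rep Xu" using XU geq Rep_all by blast
  then obtain lam fs where l0: "lam \<noteq> 0" and g: "good fs" and Xeq: "Xu = ws True lam 0 \<otimes>\<^bsub>WW\<^esub> prodW fs"
    by (auto simp: Rep_def)
  have Pc: "prodW fs \<in> carrier WW" by (rule prodW_carrier[OF g])
  have rXP: "rep Xu = (\<lambda>v. lam * rep (prodW fs) v)" using Xeq rep_sc_mult[OF Pc] by simp
  obtain \<gamma> where g0: "\<gamma> \<noteq> 0" and bP: "bnd (length fs) (rep (prodW fs))"
    and top: "\<And>w. alt w \<Longrightarrow> length w = length fs \<Longrightarrow> rep (prodW fs) w = (if w = map fst fs then \<gamma> else 0)"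
    using prodW_top[OF g] by blast
  have afs: "alt (map fst fs)" using g by (simp add: good_def)
  have nz: "rep (prodW fs) [d, e, d] \<noteq> 0" using vX rXP by auto
  have l3: "\<not> length fs < 3" using nz bP by (auto simp: bnd_def)
  have "\<not> length fs > 3"
  proof
    assume "length fs > 3"
    moreover have "rep Xu (map fst fs) = lam * \<gamma>" using top[OF afs] by (simp add: rXP)
    ultimately show False using bX l0 g0 by (auto simp: bnd_def)
  qed
  then have l3': "length fs = 3" using l3 by simp
  have ade: "alt [d, e, d]" using de by (simp add: e_def)
  have mfs: "map fst fs = [d, e, d]" using top[OF ade] l3' nz by (auto split: if_splits)
  obtain fs2 f3 where fsf: "fs = fs2 @ [f3]" using l3' by (metis length_0_conv rev_exhaust zero_neq_numeral)
  have f3d: "fst f3 = d" using mfs fsf by auto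
  have lfs2: "length fs2 = 2" using l3' fsf by simp
  have g2: "good fs2" and k3U: "snd f3 \<in> Units WW" using g fsf by (auto simp: good_snoc)
  obtain \<alpha>3 \<beta>3 where b30: "\<beta>3 \<noteq> 0" and k3: "snd f3 = ws d \<alpha>3 \<beta>3" using g fsf f3d by (auto simp: good_snoc)
  define k' where "k' = inv\<^bsub>WW\<^esub> (snd f3)"
  have N3: "\<alpha>3 * \<alpha>3 - cf p q d 1 * \<alpha>3 * \<beta>3 + cf p q d 0 * \<beta>3 * \<beta>3 \<noteq> 0"
    using ws_unit_N k3U k3 by simp
  define N3v where "N3v = \<alpha>3 * \<alpha>3 - cf p q d 1 * \<alpha>3 * \<beta>3 + cf p q d 0 * \<beta>3 * \<beta>3"
  have k'e: "k' = ws d ((\<alpha>3 - cf p q d 1 * \<beta>3) / N3v) (- \<beta>3 / N3v)"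
    unfolding k'_def k3 N3v_def by (rule ws_unit(2)[OF N3])
  have "- \<beta>3 / N3v \<noteq> 0" using b30 N3 by (simp add: N3v_def)
  then obtain \<alpha> \<beta> where b0: "\<beta> \<noteq> 0" and k': "k' = ws d \<alpha> \<beta>" using k'e by blast
  have k'U: "k' \<in> Units WW" unfolding k'_def using k3U by (simp add: R.Units_inv_Units)
  have k3c: "snd f3 \<in> carrier WW" using k3U by (simp add: Units_W)
  have k'c: "k' \<in> carrier WW" using k'U by (simp add: Units_W)
  have P2c: "prodW fs2 \<in> carrier WW" by (rule prodW_carrier[OF g2])
  have Xuk1: "Xu \<otimes>\<^bsub>WW\<^esub> k' = ws True lam 0 \<otimes>\<^bsub>WW\<^esub> prodW fs2"
  proof -
    have "Xu \<otimes>\<^bsub>WW\<^esub> k' = (ws True lam 0 \<otimes>\<^bsub>WW\<^esub> prodW fs2) \<otimes>\<^bsub>WW\<^esub> (snd f3 \<otimes>\<^bsub>WW\<^esub> k')"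
      by (simp add: Xeq fsf prodW_snoc R.m_assoc P2c k3c k'c)
    also have "\<dots> = ws True lam 0 \<otimes>\<^bsub>WW\<^esub> prodW fs2"
      by (simp add: k'_def R.Units_r_inv[OF k3U] P2c)
    finally show ?thesis .
  qed
  have b2: "bnd 2 (rep (Xu \<otimes>\<^bsub>WW\<^esub> k'))"
    using prodW_top[OF g2] lfs2 Xuk1 rep_sc_mult[OF P2c] by (auto simp: bnd_def)
  define \<mu> where "\<mu> = \<alpha> + r * \<beta>"
  have Ck: "C \<otimes>\<^bsub>WW\<^esub> k' = ws d \<mu> 0 \<otimes>\<^bsub>WW\<^esub> C"
    unfolding C_def k' ws_mult by (simp add: \<mu>_def c0 c1 c1' algebra_simps)
  have zk: "z \<otimes>\<^bsub>WW\<^esub> k' = ws d \<mu> 0 \<otimes>\<^bsub>WW\<^esub> z"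
  proof -
    have "z \<otimes>\<^bsub>WW\<^esub> k' = (A \<otimes>\<^bsub>WW\<^esub> B) \<otimes>\<^bsub>WW\<^esub> (C \<otimes>\<^bsub>WW\<^esub> k')"
      by (simp add: z_def R.m_assoc Ac Bc Cc k'c)
    also have "\<dots> = ((A \<otimes>\<^bsub>WW\<^esub> B) \<otimes>\<^bsub>WW\<^esub> ws d \<mu> 0) \<otimes>\<^bsub>WW\<^esub> C"
      by (simp add: Ck R.m_assoc Ac Bc Cc)
    also have "\<dots> = (ws d \<mu> 0 \<otimes>\<^bsub>WW\<^esub> (A \<otimes>\<^bsub>WW\<^esub> B)) \<otimes>\<^bsub>WW\<^esub> C"
      using sc_central[OF ABc, of d \<mu>] by simp
    also have "\<dots> = ws d \<mu> 0 \<otimes>\<^bsub>WW\<^esub> z"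
      by (simp add: z_def R.m_assoc Ac Bc Cc)
    finally show ?thesis .
  qed
  have Xk2: "rep (Xu \<otimes>\<^bsub>WW\<^esub> k') = (\<lambda>v. wsf d \<alpha> \<beta> v + \<mu> * rep z v)"
  proof -
    have "Xu \<otimes>\<^bsub>WW\<^esub> k' = k' \<oplus>\<^bsub>WW\<^esub> z \<otimes>\<^bsub>WW\<^esub> k'"
      by (simp add: Xu_def R.l_distr zc k'c)
    then have e1: "Xu \<otimes>\<^bsub>WW\<^esub> k' = k' \<oplus>\<^bsub>WW\<^esub> ws d \<mu> 0 \<otimes>\<^bsub>WW\<^esub> z" by (simp only: zk)
    have "rep (Xu \<otimes>\<^bsub>WW\<^esub> k') = (\<lambda>v. rep k' v + rep (ws d \<mu> 0 \<otimes>\<^bsub>WW\<^esub> z) v)"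
      unfolding e1 by (rule rep_add) (simp_all add: k'c zc)
    then show ?thesis by (simp add: rep_sc_mult zc k' rep_ws)
  qed
  have "rep (Xu \<otimes>\<^bsub>WW\<^esub> k') [d, e, d] = \<mu>" using vz by (simp add: Xk2 wsf_def)
  then have mu0: "\<mu> = 0" using b2 by (simp add: bnd_def)
  have "k' \<otimes>\<^bsub>WW\<^esub> C = \<zero>\<^bsub>WW\<^esub>"
  proof -
    have a: "\<alpha> = - r * \<beta>" using mu0 unfolding \<mu>_def by (simp add: eq_neg_iff_add_eq_0)
    show ?thesis unfolding k' C_def ws_mult ws_zero[of d, symmetric] by (simp add: a c0 c1 c1' algebra_simps)
  qed
  then have "C = \<zero>\<^bsub>WW\<^esub>"
  proof -
    assume kC: "k' \<otimes>\<^bsub>WW\<^esub> C = \<zero>\<^bsub>WW\<^esub>"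
    have ic: "inv\<^bsub>WW\<^esub> k' \<in> carrier WW" using k'U by (rule R.Units_inv_closed)
    have "C = (inv\<^bsub>WW\<^esub> k' \<otimes>\<^bsub>WW\<^esub> k') \<otimes>\<^bsub>WW\<^esub> C" by (simp add: R.Units_l_inv[OF k'U] Cc)
    also have "\<dots> = inv\<^bsub>WW\<^esub> k' \<otimes>\<^bsub>WW\<^esub> (k' \<otimes>\<^bsub>WW\<^esub> C)" by (rule R.m_assoc[OF ic k'c Cc])
    also have "\<dots> = \<zero>\<^bsub>WW\<^esub>" by (simp add: kC ic)
    finally show ?thesis .
  qed
  then show False by (simp add: C_def ws_zero_iff)
qed

end

lemma irr2:
  fixes p :: "'a::field poly"
  assumes d: "degree p = 2"
  shows "Factorial_Ring.irreducible p \<longleftrightarrow> (\<forall>r. poly p r \<noteq> 0)"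
proof
  assume irr: "Factorial_Ring.irreducible p"
  show "\<forall>r. poly p r \<noteq> 0"
  proof (intro allI notI)
    fix r assume "poly p r = 0"
    then obtain k where pk: "p = [:- r, 1:] * k" using poly_eq_0_iff_dvd by (metis dvdE)
    have p0: "p \<noteq> 0" using d by auto
    then have k0: "k \<noteq> 0" using pk by auto
    have e: "degree ([:- r, 1:] * k) = degree [:- r, 1:] + degree k" by (rule degree_mult_eq) (simp_all add: k0)
    have "degree ([:- r, 1:] * k) = 2" using d[unfolded pk] .
    then have dk: "degree k = 1" using e by simp
    have "[:- r, 1:] dvd 1 \<or> k dvd 1" using Factorial_Ring.irreducibleD[OF irr pk] .
    then show False using dk k0 by (auto simp: is_unit_iff_degree)
  qed
next
  assume nr: "\<forall>r. poly p r \<noteq> 0"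
  show "Factorial_Ring.irreducible p"
  proof (rule Factorial_Ring.irreducibleI)
    show p0: "p \<noteq> 0" using d by auto
    show "\<not> p dvd 1" using d p0 by (auto simp: is_unit_iff_degree)
    fix a b assume ab: "p = a * b"
    show "a dvd 1 \<or> b dvd 1"
    proof (rule ccontr)
      assume nu: "\<not> (a dvd 1 \<or> b dvd 1)"
      have a0: "a \<noteq> 0" and b0: "b \<noteq> 0" using ab p0 by auto
      have "degree a \<noteq> 0" "degree b \<noteq> 0" using nu a0 b0 by (auto simp: is_unit_iff_degree)
      moreover have "degree a + degree b = 2" using ab a0 b0 d by (simp add: degree_mult_eq)
      ultimately have da: "degree a = 1" by linarith
      define x where "x = - coeff a 0 / coeff a 1"
      have a1: "coeff a 1 \<noteq> 0" using a0 da by (metis leading_coeff_0_iff)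
      have "poly a x = coeff a 0 + coeff a 1 * x"
        using da by (simp add: poly_altdef atMost_Suc)
      then have "poly a x = 0" using a1 by (simp add: x_def)
      then have "poly p x = 0" using ab by simp
      then show False using nr by blast
    qed
  qed
qed

theorem mainTheorem3:
  fixes p q :: "'a::field poly"
  assumes "degree p = 2" and "lead_coeff p = 1"
      and "degree q = 2" and "lead_coeff q = 1"
  shows "generate (units_of (W_alg p q)) (basic_units p q) = Units (W_alg p q)
         \<longleftrightarrow> Factorial_Ring.irreducible p \<and> Factorial_Ring.irreducible q"
proof -
  interpret wpq p q by unfold_locales (rule assms)+
  show ?thesis
  proof
    assume g: "generate (units_of (W_alg p q)) (basic_units p q) = Units (W_alg p q)"
    have "\<forall>r. poly p r \<noteq> 0"
    proof
      fix r show "poly p r \<noteq> 0" using not_gen[of True r] g by auto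
    qed
    moreover have "\<forall>r. poly q r \<noteq> 0"
    proof
      fix r show "poly q r \<noteq> 0" using not_gen[of False r] g by auto
    qed
    ultimately show "Factorial_Ring.irreducible p \<and> Factorial_Ring.irreducible q"
      using irr2[OF assms(1)] irr2[OF assms(3)] by simp
  next
    assume "Factorial_Ring.irreducible p \<and> Factorial_Ring.irreducible q"
    then have np: "\<forall>r. poly p r \<noteq> 0" and nq: "\<forall>r. poly q r \<noteq> 0"
      using irr2[OF assms(1)] irr2[OF assms(3)] by auto
    have "\<And>c r. poly (if c then p else q) r \<noteq> 0" using np nq by simp
    then show "generate (units_of (W_alg p q)) (basic_units p q) = Units (W_alg p q)" by (rule gen_all)
  qed
qed

end
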